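(* Let $s\geqslant1$, let $\bar X=X_1,\dots,X_r$ be variables and $\bar f=f_1,\dots,f_r$ elements of the corresponding domains of $\mathcal{B}_s$. (1) Let $m\geqslant1$, let $\varphi(\bar X)$ be a formula of $LP_s$ with all free variables among $\bar X$ and $sort(\varphi)\leqslant m$, and let $\alpha,\beta\in M$ satisfy $\langle\alpha\rangle_i=\langle\beta\rangle_i$ for all $i=0,\dots,m-1$. Then $\alpha\Vdash\varphi(\bar f)$ iff $\beta\Vdash\varphi(\bar f)$. (2) Let $p\geqslant1$, let $\varphi(\mathcal H^p,\bar X)$ be a formula of $LP_s$ with all free variables among $\mathcal H^p,\bar X$, with $sort(\varphi)\leqslant p$, and such that $\varphi$ has no free variables of type $p$ over non-lawlike functionals other than $\mathcal H^p$. Let $\alpha\in M$ and $g,h\in l_p$ with $g(\bar\alpha(p),n)=h(\bar\alpha(p),n)$ for all $n<lh(\alpha)$. Then $\alpha\Vdash\varphi(g,\bar f)$ iff $\alpha\Vdash\varphi(h,\bar f)$.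
   Context: $sort(\varphi)$ is the maximal type of the free variables of $\varphi$ (0 if none); number variables have type 0, and the three kinds of functional variables $F^n,A^n,\mathcal F^n$ have type $n$; "non-lawlike" variables of type $n$ are the $F^n$ and $\mathcal F^n$. Language $L_s$ ($s\geqslant1$). Variables: $x,y,z,\dots$ of type 0 (natural numbers); for $1\leqslant n\leqslant s$, variables $F^n,G^n,\dots$ (over $n$-functionals), $A^n,B^n,\dots$ (over lawlike $n$-functionals), $\mathcal{F}^n,\mathcal{G}^n,\dots$ (over lawless $n$-functionals). Constants: $0$ and $K^n$. Terms and $n$-functionals: number variables and $0$ are terms; type-$n$ variables and $K^n$ are $n$-functionals; $St$, $t+\tau$, $t\cdot\tau$ are terms for terms $t,\tau$; $N^n(Z)$ is an $n$-functional for an $n$-functional $Z$; $Z(t)=Ap^1(Z,t)$ is a term for a 1-functional $Z$; $Z(t)=Ap^{n+1}(Z,t)$ is an $n$-functional for an $(n+1)$-functional $Z$. Atomic formulas $t=_0\tau$, $Z=_nV$; formulas built with $\bot,\wedge,\vee,\supset,\forall,\exists$. $LP_s$ adds atomic formulas $\vdash_z\varphi(\bar X)$ for terms $z$ and formulas $\varphi$ of $L_s$ with free variables in $\bar X$. Beth model $\mathcal{B}_s$. A path in a poset is a maximal linearly ordered subset; a path through $x$ is a path containing $x$. $b^{(m)}$: sequences of length $m$ from $b$; $b^*$: finite sequences, with $y\leqslant x$ iff $x$ is an initial segment of $y$. $a_0=\omega$, $d_0=\{\langle x\rangle:x\in\omega^*\}$ with $\langle x\rangle\preccurlyeq_0\langle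 y\rangle$ iff $x\leqslant y$. For $k\geqslant1$: $a_k$ = partial functions $f:d_{k-1}\times\omega\dashrightarrow a_{k-1}$ that are monotonic ($y\preccurlyeq_{k-1}x\Rightarrow f(x,\cdot)\subseteq f(y,\cdot)$) and complete (for each path $S$ in $d_{k-1}$, $\bigcup_{x\in S}f(x,\cdot)$ is total); $d_k=\bigcup_m a_0^{(m)}\times\dots\times a_k^{(m)}$, $x\preccurlyeq_ky$ iff $\langle x\rangle_i\leqslant\langle y\rangle_i$ for all $i\leqslant k$, $lh(x)=m$ on the $m$-th piece. Nodes $M=d_{s-1}$, $\preccurlyeq=\preccurlyeq_{s-1}$, root $\varepsilon=\langle\langle\rangle,\dots,\langle\rangle\rangle$; for $\alpha=\langle\alpha_0,\dots,\alpha_{s-1}\rangle$, $\langle\alpha\rangle_i=\alpha_i$ and $\bar\alpha(k)=\langle\alpha_0,\dots,\alpha_{k-1}\rangle\in d_{k-1}$. Domains: $\omega$; $a_k$; $b_k=\{f\in a_k: f(\text{root of }d_{k-1},\cdot)\text{ total}\}$; $l_k=\{\nu_k(\xi):\xi\in c_k\}$ with $c_k$ the maps $\xi:\omega\times a_{k-1}\to a_{k-1}$ with each $\xi(n,\cdot)$ bijective and $\nu_k(\xi)(x,n)=\xi(n,\langle\langle x\rangle_{k-1}\rangle_n)$ for $n<lh(x)$, undefined otherwise. Interpretations: $\widehat K^1(x,n)=0$, $\widehat K^{k+1}(x,n)=\widehat K^k$; usual $0,S,+,\cdot$; $N^k\mapsto S^k$ with $S^0(x)=x+1$, $S^{n+1}(f)=S^n\circ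 f$; at node $\alpha$, $Ap^k(f,n)\mapsto f(\bar\alpha(k),n)$; $Z^{[\alpha]}$ is the (possibly undefined) value at $\alpha$ of an evaluated term/functional. $Val(\alpha,Z=_kV)=T$ iff $Z^{[\alpha]},V^{[\alpha]}$ defined and equal; $Val(\alpha,\vdash_t\varphi)=T$ iff $t^{[\alpha]}$ defined and some $\gamma$ with $\alpha\preccurlyeq\gamma$, $lh(\gamma)=t^{[\alpha]}$ has $\gamma\Vdash\varphi$. Forcing (Beth): atomic $\varphi$: every path through $\alpha$ meets $\beta$ with $Val(\beta,\varphi)=T$; $\alpha\not\Vdash\bot$; $\wedge$ componentwise; $\vee$: every path through $\alpha$ meets $\beta$ forcing a disjunct; $\psi\supset\eta$: every $\beta\preccurlyeq\alpha$ forcing $\psi$ forces $\eta$; $\forall X\psi$: $\alpha\Vdash\psi(c)$ for all $c$ in the domain; $\exists X\psi$: every path through $\alpha$ meets $\beta$ with $\beta\Vdash\psi(c)$ for some $c$. $\mathcal B_s\Vdash\varphi$ means $\varepsilon\Vdash\varphi$. *)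

theory Defs
  imports Main "HOL-Library.Sublist"
begin

text \<open>Variable kinds: number variables (type 0), general functional variables F^n,
  lawlike functional variables A^n, lawless functional variables (calligraphic F)^n.
  A variable is a triple (kind, type, index).\<close>
datatype vkind = VNum | VGen | VLaw | VLawless

type_synonym var = "vkind \<times> nat \<times> nat"

fun vtype :: "var \<Rightarrow> nat" where
  "vtype (k, n, i) = n"

fun vkind_of :: "var \<Rightarrow> vkind" where
  "vkind_of (k, n, i) = k"

fun valid_var :: "nat \<Rightarrow> var \<Rightarrow> bool" where
  "valid_var s (VNum, n, i) = (n = 0)"
| "valid_var s (k, n, i) = (1 \<le> n \<and> n \<le> s)"

text \<open>Terms and functionals (one datatype; typing below).
  TAp n Z t is Ap^n(Z,t); TN n Z is N^n(Z); TK n is K^n.\<close>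
datatype trm = TVar var | TZero | TK nat | TSuc trm | TPlus trm trm | TTimes trm trm
  | TN nat trm | TAp nat trm trm

fun ty :: "nat \<Rightarrow> trm \<Rightarrow> nat option" where
  "ty s (TVar v) = (if valid_var s v then Some (vtype v) else None)"
| "ty s TZero = Some 0"
| "ty s (TK n) = (if 1 \<le> n \<and> n \<le> s then Some n else None)"
| "ty s (TSuc t) = (if ty s t = Some 0 then Some 0 else None)"
| "ty s (TPlus a b) = (if ty s a = Some 0 \<and> ty s b = Some 0 then Some 0 else None)"
| "ty s (TTimes a b) = (if ty s a = Some 0 \<and> ty s b = Some 0 then Some 0 else None)"
| "ty s (TN n z) = (if 1 \<le> n \<and> ty s z = Some n then Some n else None)"
| "ty s (TAp n z t) = (if 1 \<le> n \<and> ty s z = Some n \<and> ty s t = Some 0 then Some (n - 1) else None)"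

text \<open>Formulas. Eq k a b is a =_k b (k = 0 for number terms). Prov z phi is the
  atomic formula |-_z phi.\<close>
datatype fm = Bot | Eq nat trm trm | Prov trm fm | Conj fm fm | Disj fm fm | Imp fm fm
  | All var fm | Ex var fm

text \<open>wf s b phi: phi is a formula of LP_s (if b) resp. of L_s (if not b).\<close>
fun wf :: "nat \<Rightarrow> bool \<Rightarrow> fm \<Rightarrow> bool" where
  "wf s b Bot = True"
| "wf s b (Eq k x y) = (ty s x = Some k \<and> ty s y = Some k)"
| "wf s b (Prov z \<phi>) = (b \<and> ty s z = Some 0 \<and> wf s False \<phi>)"
| "wf s b (Conj \<phi> \<psi>) = (wf s b \<phi> \<and> wf s b \<psi>)"
| "wf s b (Disj \<phi> \<psi>) = (wf s b \<phi> \<and> wf s b \<psi>)"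
| "wf s b (Imp \<phi> \<psi>) = (wf s b \<phi> \<and> wf s b \<psi>)"
| "wf s b (All v \<phi>) = (valid_var s v \<and> wf s b \<phi>)"
| "wf s b (Ex v \<phi>) = (valid_var s v \<and> wf s b \<phi>)"

fun fvt :: "trm \<Rightarrow> var set" where
  "fvt (TVar v) = {v}"
| "fvt TZero = {}"
| "fvt (TK n) = {}"
| "fvt (TSuc t) = fvt t"
| "fvt (TPlus a b) = fvt a \<union> fvt b"
| "fvt (TTimes a b) = fvt a \<union> fvt b"
| "fvt (TN n z) = fvt z"
| "fvt (TAp n z t) = fvt z \<union> fvt t"

fun fv :: "fm \<Rightarrow> var set" where
  "fv Bot = {}"
| "fv (Eq k x y) = fvt x \<union> fvt y"
| "fv (Prov z \<phi>) = fvt z \<union> fv \<phi>"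
| "fv (Conj \<phi> \<psi>) = fv \<phi> \<union> fv \<psi>"
| "fv (Disj \<phi> \<psi>) = fv \<phi> \<union> fv \<psi>"
| "fv (Imp \<phi> \<psi>) = fv \<phi> \<union> fv \<psi>"
| "fv (All v \<phi>) = fv \<phi> - {v}"
| "fv (Ex v \<phi>) = fv \<phi> - {v}"

definition sort :: "fm \<Rightarrow> nat" where
  "sort \<phi> = Max (insert 0 (vtype ` fv \<phi>))"

definition is_chain :: "('a \<Rightarrow> 'a \<Rightarrow> bool) \<Rightarrow> 'a set \<Rightarrow> bool" where
  "is_chain le P \<longleftrightarrow> (\<forall>x\<in>P. \<forall>y\<in>P. le x y \<or> le y x)"

definition is_path :: "'a set \<Rightarrow> ('a \<Rightarrow> 'a \<Rightarrow> bool) \<Rightarrow> 'a set \<Rightarrow> bool" where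
  "is_path X le P \<longleftrightarrow> P \<subseteq> X \<and> is_chain le P \<and>
     (\<forall>Q. Q \<subseteq> X \<and> is_chain le Q \<and> P \<subseteq> Q \<longrightarrow> Q = P)"

text \<open>The order on d_k: x \<preccurlyeq> y iff each component of y is an initial segment of
  the corresponding component of x.  Elements of d_k are represented as lists
  of k+1 sequences.\<close>
definition nle :: "'u list list \<Rightarrow> 'u list list \<Rightarrow> bool" where
  "nle x y \<longleftrightarrow> length x = length y \<and> (\<forall>i<length x. prefix (y ! i) (x ! i))"

definition lh :: "'u list list \<Rightarrow> nat" where
  "lh x = length (x ! 0)"

text \<open>All objects of all levels live in one type 'u: numbers via ne, and a
  level-(k+1) functional (a partial function d_k \<times> \<omega> \<rightharpoonup> a_k) via en.  The
  theorem assumes ne injective and en injective on each level used, so the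
  structure below is an isomorphic copy of the paper's B_s.\<close>
locale beth =
  fixes ne :: "nat \<Rightarrow> 'u"
    and en :: "('u list list \<times> nat \<Rightarrow> 'u option) \<Rightarrow> 'u"
begin

definition ndec :: "'u \<Rightarrow> nat" where
  "ndec u = inv ne u"

definition Dof :: "(nat \<Rightarrow> 'u set) \<Rightarrow> nat \<Rightarrow> 'u list list set" where
  "Dof As k = {x. length x = Suc k \<and>
      (\<forall>i\<le>k. set (x ! i) \<subseteq> As i \<and> length (x ! i) = length (x ! 0))}"

definition PFof :: "(nat \<Rightarrow> 'u set) \<Rightarrow> nat \<Rightarrow> ('u list list \<times> nat \<Rightarrow> 'u option) set" where
  "PFof As k = {f.
      (\<forall>x n. f (x, n) \<noteq> None \<longrightarrow> x \<in> Dof As k) \<and>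
      (\<forall>x n v. f (x, n) = Some v \<longrightarrow> v \<in> As k) \<and>
      (\<forall>x\<in>Dof As k. \<forall>y\<in>Dof As k. nle y x \<longrightarrow> (\<forall>n v. f (x, n) = Some v \<longrightarrow> f (y, n) = Some v)) \<and>
      (\<forall>P. is_path (Dof As k) nle P \<longrightarrow> (\<forall>n. \<exists>x\<in>P. f (x, n) \<noteq> None))}"

fun Alist :: "nat \<Rightarrow> 'u set list" where
  "Alist 0 = [range ne]"
| "Alist (Suc k) = Alist k @ [en ` PFof (\<lambda>i. Alist k ! i) k]"

definition A :: "nat \<Rightarrow> 'u set" where
  "A k = Alist k ! k"

definition D :: "nat \<Rightarrow> 'u list list set" where
  "D k = Dof A k"

definition PF :: "nat \<Rightarrow> ('u list list \<times> nat \<Rightarrow> 'u option) set" where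
  "PF k = PFof A k"

definition dec :: "nat \<Rightarrow> 'u \<Rightarrow> ('u list list \<times> nat \<Rightarrow> 'u option)" where
  "dec k u = the_inv_into (PF (k - 1)) en u"

text \<open>b_k: lawlike functionals (total at the root of d_(k-1)).\<close>
definition B :: "nat \<Rightarrow> 'u set" where
  "B k = {u \<in> A k. \<forall>n. dec k u (replicate k [], n) \<noteq> None}"

definition C :: "nat \<Rightarrow> (nat \<Rightarrow> 'u \<Rightarrow> 'u) set" where
  "C k = {\<xi>. \<forall>n. bij_betw (\<xi> n) (A (k - 1)) (A (k - 1))}"

definition nu :: "nat \<Rightarrow> (nat \<Rightarrow> 'u \<Rightarrow> 'u) \<Rightarrow> ('u list list \<times> nat \<Rightarrow> 'u option)" where
  "nu k \<xi> = (\<lambda>(x, n). if x \<in> D (k - 1) \<and> n < lh x then Some (\<xi> n ((x ! (k - 1)) ! n)) else None)"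

definition L :: "nat \<Rightarrow> 'u set" where
  "L k = (\<lambda>\<xi>. en (nu k \<xi>)) ` C k"

fun vdom :: "var \<Rightarrow> 'u set" where
  "vdom (VNum, n, i) = A 0"
| "vdom (VGen, n, i) = A n"
| "vdom (VLaw, n, i) = B n"
| "vdom (VLawless, n, i) = L n"

fun Khat :: "nat \<Rightarrow> 'u" where
  "Khat 0 = ne 0"
| "Khat (Suc k) = en (\<lambda>(x, n). if x \<in> D k then Some (Khat k) else None)"

fun Sf :: "nat \<Rightarrow> 'u \<Rightarrow> 'u" where
  "Sf 0 u = ne (Suc (ndec u))"
| "Sf (Suc k) u = en (\<lambda>xn. map_option (Sf k) (dec (Suc k) u xn))"

fun ev :: "'u list list \<Rightarrow> (var \<Rightarrow> 'u) \<Rightarrow> trm \<Rightarrow> 'u option" where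
  "ev \<alpha> \<rho> (TVar v) = Some (\<rho> v)"
| "ev \<alpha> \<rho> TZero = Some (ne 0)"
| "ev \<alpha> \<rho> (TK n) = Some (Khat n)"
| "ev \<alpha> \<rho> (TSuc t) = map_option (\<lambda>u. ne (Suc (ndec u))) (ev \<alpha> \<rho> t)"
| "ev \<alpha> \<rho> (TPlus a b) = (case (ev \<alpha> \<rho> a, ev \<alpha> \<rho> b) of
      (Some x, Some y) \<Rightarrow> Some (ne (ndec x + ndec y)) | _ \<Rightarrow> None)"
| "ev \<alpha> \<rho> (TTimes a b) = (case (ev \<alpha> \<rho> a, ev \<alpha> \<rho> b) of
      (Some x, Some y) \<Rightarrow> Some (ne (ndec x * ndec y)) | _ \<Rightarrow> None)"
| "ev \<alpha> \<rho> (TN n z) = map_option (Sf n) (ev \<alpha> \<rho> z)"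
| "ev \<alpha> \<rho> (TAp n z t) = (case (ev \<alpha> \<rho> z, ev \<alpha> \<rho> t) of
      (Some f, Some m) \<Rightarrow> dec n f (take n \<alpha>, ndec m) | _ \<Rightarrow> None)"

text \<open>Beth forcing in B_s; nodes M = d_(s-1).\<close>
primrec forces :: "nat \<Rightarrow> fm \<Rightarrow> (var \<Rightarrow> 'u) \<Rightarrow> 'u list list \<Rightarrow> bool" where
  "forces s Bot \<rho> \<alpha> = False"
| "forces s (Eq k x y) \<rho> \<alpha> =
     (\<forall>P. is_path (D (s - 1)) nle P \<and> \<alpha> \<in> P \<longrightarrow>
        (\<exists>\<beta>\<in>P. ev \<beta> \<rho> x \<noteq> None \<and> ev \<beta> \<rho> x = ev \<beta> \<rho> y))"
| "forces s (Prov z \<phi>) \<rho> \<alpha> =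
     (\<forall>P. is_path (D (s - 1)) nle P \<and> \<alpha> \<in> P \<longrightarrow>
        (\<exists>\<beta>\<in>P. \<exists>u. ev \<beta> \<rho> z = Some u \<and>
           (\<exists>\<gamma>\<in>D (s - 1). nle \<beta> \<gamma> \<and> lh \<gamma> = ndec u \<and> forces s \<phi> \<rho> \<gamma>)))"
| "forces s (Conj \<phi> \<psi>) \<rho> \<alpha> = (forces s \<phi> \<rho> \<alpha> \<and> forces s \<psi> \<rho> \<alpha>)"
| "forces s (Disj \<phi> \<psi>) \<rho> \<alpha> =
     (\<forall>P. is_path (D (s - 1)) nle P \<and> \<alpha> \<in> P \<longrightarrow>
        (\<exists>\<beta>\<in>P. forces s \<phi> \<rho> \<beta> \<or> forces s \<psi> \<rho> \<beta>))"
| "forces s (Imp \<phi> \<psi>) \<rho> \<alpha> =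
     (\<forall>\<beta>\<in>D (s - 1). nle \<beta> \<alpha> \<longrightarrow> forces s \<phi> \<rho> \<beta> \<longrightarrow> forces s \<psi> \<rho> \<beta>)"
| "forces s (All v \<phi>) \<rho> \<alpha> = (\<forall>c\<in>vdom v. forces s \<phi> (\<rho>(v := c)) \<alpha>)"
| "forces s (Ex v \<phi>) \<rho> \<alpha> =
     (\<forall>P. is_path (D (s - 1)) nle P \<and> \<alpha> \<in> P \<longrightarrow>
        (\<exists>\<beta>\<in>P. \<exists>c\<in>vdom v. forces s \<phi> (\<rho>(v := c)) \<beta>))"

end

end

theory Submission
  imports Defs
begin



lemma prefix_nth_iff: "prefix a b \<longleftrightarrow> length a \<le> length b \<and> (\<forall>n<length a. a!n = b!n)"
proof
  assume "prefix a b" then obtain r where "b = a @ r" by (auto simp: prefix_def)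
  then show "length a \<le> length b \<and> (\<forall>n<length a. a!n = b!n)" by (auto simp: nth_append)
next
  assume h: "length a \<le> length b \<and> (\<forall>n<length a. a!n = b!n)"
  have "take (length a) b = a" using h by (intro nth_equalityI) auto
  then have "b = a @ drop (length a) b" by (metis append_take_drop_id)
  then show "prefix a b" by (auto simp: prefix_def)
qed

lemma prefix_same_len: assumes "prefix a b" "length a = length b" shows "a = b"
proof -
  obtain r where "b = a @ r" using assms(1) by (auto simp: prefix_def)
  then show ?thesis using assms(2) by simp
qed

definition cm :: "(nat \<Rightarrow> 'u \<Rightarrow> 'u) \<Rightarrow> 'u list \<Rightarrow> 'u list" where
  "cm f c = map (\<lambda>n. f n (c!n)) [0..<length c]"

definition pm :: "(nat \<Rightarrow> nat \<Rightarrow> 'u \<Rightarrow> 'u) \<Rightarrow> 'u list list \<Rightarrow> 'u list list" where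
  "pm \<theta> x = map (\<lambda>i. cm (\<theta> i) (x!i)) [0..<length x]"

lemma length_cm[simp]: "length (cm f c) = length c" by (simp add: cm_def)
lemma nth_cm[simp]: "n < length c \<Longrightarrow> cm f c ! n = f n (c!n)" by (simp add: cm_def)
lemma length_pm[simp]: "length (pm \<theta> x) = length x" by (simp add: pm_def)
lemma nth_pm[simp]: "i < length x \<Longrightarrow> pm \<theta> x ! i = cm (\<theta> i) (x!i)" by (simp add: pm_def)
lemma take_pm: "take n (pm \<theta> x) = pm \<theta> (take n x)"
  by (rule nth_equalityI) auto
lemma cm_inv: "(\<forall>n v. g n (f n v) = v) \<Longrightarrow> cm g (cm f c) = c"
  by (rule nth_equalityI) auto
lemma pm_inv: "(\<forall>i n v. g i n (f i n v) = v) \<Longrightarrow> pm g (pm f x) = x"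
  by (rule nth_equalityI) (auto simp: cm_inv)
lemma prefix_cm: "prefix a b \<Longrightarrow> prefix (cm f a) (cm f b)"
  by (auto simp: prefix_nth_iff)
lemma set_cm: "set (cm f c) = {f n (c!n) | n. n < length c}"
  by (auto simp: cm_def)
lemma pm_nil: "pm \<theta> (replicate k []) = replicate k []"
  by (rule nth_equalityI) (auto simp: cm_def)

lemma nle_pm: "nle y x \<Longrightarrow> nle (pm \<theta> y) (pm \<theta> x)"
  by (auto simp: nle_def prefix_cm)
lemma nle_refl: "nle x x" by (simp add: nle_def)
lemma nle_trans: "nle x y \<Longrightarrow> nle y z \<Longrightarrow> nle x z"
  unfolding nle_def using prefix_order.trans by fastforce
lemma lh_pm: "length x > 0 \<Longrightarrow> lh (pm \<theta> x) = lh x" by (simp add: lh_def)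

lemma path_image:
  assumes "is_path X le P"
    and gf: "\<forall>x. g (f x) = x" and fg: "\<forall>x. f (g x) = x"
    and X: "\<forall>x. f x \<in> X \<longleftrightarrow> x \<in> X"
    and le: "\<forall>x y. le (f x) (f y) \<longleftrightarrow> le x y"
  shows "is_path X le (f ` P)"
proof -
  have X': "\<forall>x. g x \<in> X \<longleftrightarrow> x \<in> X" using X fg by metis
  have le': "\<forall>x y. le (g x) (g y) \<longleftrightarrow> le x y" using le fg by metis
  have P: "P \<subseteq> X" "is_chain le P" and mx: "\<forall>Q. Q \<subseteq> X \<and> is_chain le Q \<and> P \<subseteq> Q \<longrightarrow> Q = P"
    using assms(1) by (auto simp: is_path_def)
  show ?thesis unfolding is_path_def
  proof (intro conjI allI impI)
    show "f ` P \<subseteq> X" using P X by auto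
    show "is_chain le (f ` P)" using P(2) le by (auto simp: is_chain_def)
    fix Q assume Q: "Q \<subseteq> X \<and> is_chain le Q \<and> f ` P \<subseteq> Q"
    have "g ` Q \<subseteq> X" using Q X' by auto
    moreover have "is_chain le (g ` Q)" using Q le' by (auto simp: is_chain_def)
    moreover have "P \<subseteq> g ` Q"
    proof
      fix x assume "x \<in> P"
      then have "f x \<in> Q" using Q by auto
      then have "g (f x) \<in> g ` Q" by (rule imageI)
      then show "x \<in> g ` Q" using gf by simp
    qed
    ultimately have "g ` Q = P" using mx by blast
    then have "f ` P = (\<lambda>x. f (g x)) ` Q" by (auto simp: image_image)
    also have "\<dots> = Q" using fg by simp
    finally show "Q = f ` P" by simp
  qed
qed

context beth begin

lemma Alist_length: "length (Alist k) = Suc k" by (induction k) auto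
lemma Alist_nth: "i \<le> k \<Longrightarrow> Alist k ! i = A i"
proof (induction k arbitrary: i)
  case 0 then show ?case by (simp add: A_def)
next
  case (Suc k) then show ?case
    by (cases "i = Suc k") (auto simp: A_def nth_append Alist_length)
qed
lemma Dof_cong: "(\<forall>i\<le>k. As i = Bs i) \<Longrightarrow> Dof As k = Dof Bs k"
  by (auto simp: Dof_def)
lemma PFof_cong: "(\<forall>i\<le>k. As i = Bs i) \<Longrightarrow> PFof As k = PFof Bs k"
  using Dof_cong[of k As Bs] by (simp add: PFof_def)
lemma A0: "A 0 = range ne" by (simp add: A_def)
lemma A_Suc: "A (Suc k) = en ` PF k"
proof -
  have "A (Suc k) = en ` PFof (\<lambda>i. Alist k ! i) k"
    by (simp add: A_def nth_append Alist_length)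
  also have "PFof (\<lambda>i. Alist k ! i) k = PF k"
    unfolding PF_def by (rule PFof_cong) (simp add: Alist_nth)
  finally show ?thesis .
qed

lemma D_iff: "x \<in> D k \<longleftrightarrow> length x = Suc k \<and> (\<forall>i\<le>k. set (x!i) \<subseteq> A i \<and> length (x!i) = lh x)"
  by (simp add: D_def Dof_def lh_def)
lemma PF_iff: "f \<in> PF k \<longleftrightarrow>
      (\<forall>x n. f (x, n) \<noteq> None \<longrightarrow> x \<in> D k) \<and>
      (\<forall>x n v. f (x, n) = Some v \<longrightarrow> v \<in> A k) \<and>
      (\<forall>x\<in>D k. \<forall>y\<in>D k. nle y x \<longrightarrow> (\<forall>n v. f (x, n) = Some v \<longrightarrow> f (y, n) = Some v)) \<and>
      (\<forall>P. is_path (D k) nle P \<longrightarrow> (\<forall>n. \<exists>x\<in>P. f (x, n) \<noteq> None))"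
  by (simp add: PF_def PFof_def D_def)

lemma root_D: "replicate (Suc k) [] \<in> D k" by (auto simp del: replicate_Suc simp: D_iff lh_def)
lemma nle_root: "x \<in> D k \<Longrightarrow> nle x (replicate (Suc k) [])"
  by (auto simp del: replicate_Suc simp: nle_def D_iff)

lemma path_ne: "is_path (D k) nle P \<Longrightarrow> P \<noteq> {}"
proof
  assume "is_path (D k) nle P" "P = {}"
  then have "{replicate (Suc k) []} = P"
    using root_D[of k] by (auto simp: is_path_def is_chain_def nle_refl)
  with \<open>P = {}\<close> show False by auto
qed

lemma const_PF: assumes a: "a \<in> A k" shows "(\<lambda>(x, n). if x \<in> D k then Some a else None) \<in> PF k"
proof -
  have "\<exists>x\<in>P. x \<in> D k" if "is_path (D k) nle P" for P
    using path_ne[OF that] that by (auto simp: is_path_def)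
  then show ?thesis using a unfolding PF_iff by (auto split: if_splits)
qed

lemma A_ne: "A k \<noteq> {}"
proof (induction k)
  case 0 then show ?case by (simp add: A0)
next
  case (Suc k) then obtain a where "a \<in> A k" by auto
  then show ?case using const_PF[of a k] by (auto simp: A_Suc)
qed

lemma nle_lh: "nle y x \<Longrightarrow> length x > 0 \<Longrightarrow> lh x \<le> lh y"
  by (auto simp: nle_def lh_def prefix_length_le)

lemma D_eq: assumes "x \<in> D k" "y \<in> D k" "nle x y" "lh x = lh y" shows "x = y"
proof (rule nth_equalityI)
  show "length x = length y" using assms by (simp add: D_iff)
  fix i assume i: "i < length x"
  then have "i \<le> k" using assms(1) by (simp add: D_iff)
  then have "length (x!i) = length (y!i)" using assms by (simp add: D_iff)
  moreover have "prefix (y!i) (x!i)" using assms(3) i by (simp add: nle_def)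
  ultimately show "x!i = y!i" using prefix_same_len[of "y!i" "x!i"] by simp
qed

lemma path_long:
  assumes P: "is_path (D k) nle P" shows "\<exists>x\<in>P. n < lh x"
proof (rule ccontr)
  assume "\<not> ?thesis"
  then have bnd: "\<forall>x\<in>P. lh x \<le> n" by auto
  have PD: "P \<subseteq> D k" and ch: "is_chain le P" if "le = nle" for le
    using P that by (auto simp: is_path_def)
  have inj: "inj_on lh P"
  proof (rule inj_onI)
    fix x y assume "x \<in> P" "y \<in> P" "lh x = lh y"
    moreover have "nle x y \<or> nle y x" using ch[OF refl] \<open>x \<in> P\<close> \<open>y \<in> P\<close> by (auto simp: is_chain_def)
    moreover have "x \<in> D k" "y \<in> D k" using PD[OF refl] \<open>x \<in> P\<close> \<open>y \<in> P\<close> by auto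
    ultimately show "x = y" using D_eq[of x k y] D_eq[of y k x] \<open>lh x = lh y\<close> by auto
  qed
  have "finite P"
    by (rule finite_imageD[OF _ inj]) (rule finite_subset[of _ "{..n}"], use bnd in auto)
  moreover have "P \<noteq> {}" using path_ne[OF P] .
  ultimately obtain x where xP: "x \<in> P" and xm: "\<forall>y\<in>P. lh y \<le> lh x"
  proof -
    assume r: "\<And>x. x \<in> P \<Longrightarrow> \<forall>y\<in>P. lh y \<le> lh x \<Longrightarrow> thesis"
    assume "finite P" "P \<noteq> {}"
    then have "Max (lh ` P) \<in> lh ` P" by simp
    then obtain x where "x \<in> P" "lh x = Max (lh ` P)" by auto
    moreover have "\<forall>y\<in>P. lh y \<le> Max (lh ` P)" using \<open>finite P\<close> by simp
    ultimately show thesis using r by simp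
  qed
  have xD: "x \<in> D k" using xP PD by auto
  define a where "a i = (SOME a. a \<in> A i)" for i
  have a: "a i \<in> A i" for i unfolding a_def using A_ne by (simp add: some_in_eq)
  define x' where "x' = map (\<lambda>i. x!i @ [a i]) [0..<length x]"
  have lenx: "length x = Suc k" using xD by (simp add: D_iff)
  have nx': "x' ! i = x!i @ [a i]" if "i \<le> k" for i using that lenx by (simp add: x'_def del: upt_Suc)
  have lx': "lh x' = Suc (lh x)" using nx'[of 0] by (simp add: lh_def)
  have x'D: "x' \<in> D k" unfolding D_iff
  proof (intro conjI allI impI)
    show "length x' = Suc k" using lenx by (simp add: x'_def)
    fix i assume i: "i \<le> k"
    show "set (x'!i) \<subseteq> A i" using xD i a by (simp add: nx' D_iff)
    show "length (x'!i) = lh x'" using xD i lx' by (simp add: nx' D_iff)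
  qed
  have x'x: "nle x' x" by (auto simp: x'_def nle_def)
  have "nle x' y" if "y \<in> P" for y
  proof -
    have "nle x y"
    proof (cases "nle y x")
      case True
      then have "lh x \<le> lh y" using nle_lh[OF True] lenx by simp
      then have "lh y = lh x" using xm that by (simp add: le_antisym)
      then have "y = x" using D_eq[OF _ xD True] that PD by auto
      then show ?thesis by (simp add: nle_refl)
    next
      case False then show ?thesis using ch[OF refl] xP that by (auto simp: is_chain_def)
    qed
    then show ?thesis using x'x nle_trans by blast
  qed
  then have "is_chain nle (insert x' P)" using ch[OF refl]
    by (auto simp: is_chain_def nle_refl)
  moreover have "insert x' P \<subseteq> D k" using x'D PD[OF refl] by simp
  moreover have "\<forall>Q. Q \<subseteq> D k \<and> is_chain nle Q \<and> P \<subseteq> Q \<longrightarrow> Q = P" using P by (simp add: is_path_def)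
  ultimately have "insert x' P = P" by blast
  then have "x' \<in> P" by auto
  then have "lh x' \<le> lh x" using xm by blast
  then show False using lx' by simp
qed

end



context beth begin

primrec tau :: "(nat \<Rightarrow> nat \<Rightarrow> 'u \<Rightarrow> 'u) \<Rightarrow> nat \<Rightarrow> 'u \<Rightarrow> 'u" where
  "tau \<theta> 0 u = u"
| "tau \<theta> (Suc k) u = en (\<lambda>(x, n). map_option (tau \<theta> k) (dec (Suc k) u (pm \<theta> x, n)))"

definition perm_ok :: "(nat \<Rightarrow> nat \<Rightarrow> 'u \<Rightarrow> 'u) \<Rightarrow> (nat \<Rightarrow> nat \<Rightarrow> 'u \<Rightarrow> 'u) \<Rightarrow> bool" where
  "perm_ok \<theta> \<theta>' \<longleftrightarrow> (\<forall>i n v. \<theta>' i n (\<theta> i n v) = v) \<and> (\<forall>i n v. \<theta> i n (\<theta>' i n v) = v) \<and>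
     (\<forall>i n v. (\<theta> i n v \<in> A i) = (v \<in> A i))"

lemma perm_ok_sym: assumes "perm_ok \<theta> \<theta>'" shows "perm_ok \<theta>' \<theta>"
proof -
  have i1: "\<And>i n v. \<theta>' i n (\<theta> i n v) = v" and i2: "\<And>i n v. \<theta> i n (\<theta>' i n v) = v"
    and i3: "\<And>i n v. (\<theta> i n v \<in> A i) = (v \<in> A i)" using assms by (simp_all add: perm_ok_def)
  have "\<theta>' i n v \<in> A i \<longleftrightarrow> v \<in> A i" for i n v using i3[of i n "\<theta>' i n v"] i2 by simp
  then show ?thesis using i1 i2 by (simp add: perm_ok_def)
qed

lemma pm_D: assumes "perm_ok \<theta> \<theta>'" shows "pm \<theta> x \<in> D k \<longleftrightarrow> x \<in> D k"
proof -
  have th: "\<And>i n v. (\<theta> i n v \<in> A i) = (v \<in> A i)" using assms by (auto simp: perm_ok_def)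
  have "set (cm (\<theta> i) c) \<subseteq> A i \<longleftrightarrow> set c \<subseteq> A i" for i c
  proof -
    have "set (cm (\<theta> i) c) \<subseteq> A i \<longleftrightarrow> (\<forall>n<length c. c!n \<in> A i)" by (auto simp: set_cm th)
    also have "\<dots> \<longleftrightarrow> set c \<subseteq> A i" by (metis in_set_conv_nth subset_code(1))
    finally show ?thesis .
  qed
  note st = this
  show ?thesis
  proof (cases "length x = Suc k")
    case False then show ?thesis by (simp add: D_iff)
  next
    case True
    then have "lh (pm \<theta> x) = lh x" by (simp add: lh_def)
    moreover have "\<forall>i\<le>k. pm \<theta> x ! i = cm (\<theta> i) (x!i)" using True by simp
    ultimately show ?thesis using True st by (simp add: D_iff)
  qed
qed

lemma pm_pm: "perm_ok \<theta> \<theta>' \<Longrightarrow> pm \<theta>' (pm \<theta> x) = x"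
  by (rule pm_inv) (auto simp: perm_ok_def)

lemma pm_nle: assumes "perm_ok \<theta> \<theta>'" shows "nle (pm \<theta> y) (pm \<theta> x) \<longleftrightarrow> nle y x"
proof
  assume "nle (pm \<theta> y) (pm \<theta> x)"
  then have "nle (pm \<theta>' (pm \<theta> y)) (pm \<theta>' (pm \<theta> x))" by (rule nle_pm)
  then show "nle y x" by (simp add: pm_pm[OF assms])
next
  assume "nle y x" then show "nle (pm \<theta> y) (pm \<theta> x)" by (rule nle_pm)
qed

lemma pm_path: assumes "perm_ok \<theta> \<theta>'" "is_path (D k) nle P"
  shows "is_path (D k) nle (pm \<theta> ` P)"
proof (rule path_image[OF assms(2), where g = "pm \<theta>'"])
  show "\<forall>x. pm \<theta>' (pm \<theta> x) = x" using pm_pm[OF assms(1)] by simp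
  show "\<forall>x. pm \<theta> (pm \<theta>' x) = x" using pm_pm[OF perm_ok_sym[OF assms(1)]] by simp
  show "\<forall>x. pm \<theta> x \<in> D k \<longleftrightarrow> x \<in> D k" using pm_D[OF assms(1)] by simp
  show "\<forall>x y. nle (pm \<theta> x) (pm \<theta> y) \<longleftrightarrow> nle x y" using pm_nle[OF assms(1)] by simp
qed

lemma D_len: "x \<in> D k \<Longrightarrow> length x = Suc k" by (simp add: D_iff)

lemma lh_pm_D: "x \<in> D k \<Longrightarrow> lh (pm \<theta> x) = lh x"
  by (rule lh_pm) (simp add: D_len)

lemma tau_F_PF:
  assumes ok: "perm_ok \<theta> \<theta>'" and cl: "\<forall>v\<in>A k. g v \<in> A k" and f: "f \<in> PF k"
  shows "(\<lambda>(x, n). map_option g (f (pm \<theta> x, n))) \<in> PF k"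
proof -
  have f1: "\<And>x n. f (x, n) \<noteq> None \<Longrightarrow> x \<in> D k"
    and f2: "\<And>x n v. f (x, n) = Some v \<Longrightarrow> v \<in> A k"
    and f3: "\<And>x y n v. x \<in> D k \<Longrightarrow> y \<in> D k \<Longrightarrow> nle y x \<Longrightarrow> f (x, n) = Some v \<Longrightarrow> f (y, n) = Some v"
    and f4: "\<And>P n. is_path (D k) nle P \<Longrightarrow> \<exists>x\<in>P. f (x, n) \<noteq> None"
    using f unfolding PF_iff by blast+
  show ?thesis unfolding PF_iff
  proof (intro conjI allI impI ballI)
    fix x n assume "(case (x, n) of (x, n) \<Rightarrow> map_option g (f (pm \<theta> x, n))) \<noteq> None"
    then have "pm \<theta> x \<in> D k" using f1 by auto
    then show "x \<in> D k" using pm_D[OF ok] by auto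
  next
    fix x n v assume "(case (x, n) of (x, n) \<Rightarrow> map_option g (f (pm \<theta> x, n))) = Some v"
    then show "v \<in> A k" using f2 cl by auto
  next
    fix x y n v assume xy: "x \<in> D k" "y \<in> D k" "nle y x"
      and "(case (x, n) of (x, n) \<Rightarrow> map_option g (f (pm \<theta> x, n))) = Some v"
    then obtain w where w: "f (pm \<theta> x, n) = Some w" "v = g w" by auto
    have "pm \<theta> x \<in> D k" "pm \<theta> y \<in> D k" "nle (pm \<theta> y) (pm \<theta> x)"
      using xy pm_D[OF ok] pm_nle[OF ok] by auto
    then have "f (pm \<theta> y, n) = Some w" using f3 w by blast
    then show "(case (y, n) of (x, n) \<Rightarrow> map_option g (f (pm \<theta> x, n))) = Some v" using w by simp
  next
    fix P n assume "is_path (D k) nle P"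
    then have "is_path (D k) nle (pm \<theta> ` P)" by (rule pm_path[OF ok])
    then obtain x' where "x' \<in> pm \<theta> ` P" "f (x', n) \<noteq> None" using f4 by blast
    then show "\<exists>x\<in>P. (case (x, n) of (x, n) \<Rightarrow> map_option g (f (pm \<theta> x, n))) \<noteq> None" by auto
  qed
qed

end

locale bm = beth ne en for ne :: "nat \<Rightarrow> 'u" and en :: "('u list list \<times> nat \<Rightarrow> 'u option) \<Rightarrow> 'u" +
  fixes s :: nat
  assumes s1: "1 \<le> s" and injne: "inj ne" and injen: "\<forall>k<s. inj_on en (PF k)"
begin

lemma ndec_ne[simp]: "ndec (ne n) = n" by (simp add: ndec_def injne)

lemma dec_en: "k < s \<Longrightarrow> f \<in> PF k \<Longrightarrow> dec (Suc k) (en f) = f"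
  by (simp add: dec_def the_inv_into_f_f injen)

lemma A_SucE: "k < s \<Longrightarrow> u \<in> A (Suc k) \<Longrightarrow> dec (Suc k) u \<in> PF k \<and> en (dec (Suc k) u) = u"
  by (auto simp: A_Suc dec_en)

lemma tau_closed: "perm_ok \<theta> \<theta>' \<Longrightarrow> k \<le> s \<Longrightarrow> u \<in> A k \<Longrightarrow> tau \<theta> k u \<in> A k \<and> tau \<theta>' k (tau \<theta> k u) = u"
proof (induction k arbitrary: u)
  case 0 then show ?case by simp
next
  case (Suc k)
  have ks: "k < s" using Suc by simp
  have ks': "k \<le> s" using ks by simp
  have IHA: "\<And>v. v \<in> A k \<Longrightarrow> tau \<theta> k v \<in> A k" and IHI: "\<And>v. v \<in> A k \<Longrightarrow> tau \<theta>' k (tau \<theta> k v) = v"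
    using Suc.IH[OF Suc.prems(1) ks'] by blast+
  define f where "f = dec (Suc k) u"
  have f: "f \<in> PF k" "en f = u" using A_SucE[OF ks Suc.prems(3)] f_def by auto
  define F where "F = (\<lambda>(x, n). map_option (tau \<theta> k) (f (pm \<theta> x, n)))"
  have FP: "F \<in> PF k" unfolding F_def
    by (rule tau_F_PF[OF Suc.prems(1) _ f(1)]) (use IHA in blast)
  have t: "tau \<theta> (Suc k) u = en F" by (simp add: F_def f_def)
  have "tau \<theta>' (Suc k) (en F) = en (\<lambda>(x, n). map_option (tau \<theta>' k) (F (pm \<theta>' x, n)))"
    by (simp add: dec_en[OF ks FP])
  also have "(\<lambda>(x, n). map_option (tau \<theta>' k) (F (pm \<theta>' x, n))) = f"
  proof (intro ext, clarify)
    fix x n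
    have fv: "\<And>v. f (x, n) = Some v \<Longrightarrow> v \<in> A k" using f(1) unfolding PF_iff by blast
    have pp: "pm \<theta> (pm \<theta>' x) = x" using pm_pm[OF perm_ok_sym[OF Suc.prems(1)]] by simp
    show "map_option (tau \<theta>' k) (F (pm \<theta>' x, n)) = f (x, n)"
    proof (cases "f (x, n)")
      case None then show ?thesis by (simp add: F_def pp)
    next
      case (Some v) then show ?thesis using IHI[OF fv[OF Some]] by (simp add: F_def pp)
    qed
  qed
  finally have "tau \<theta>' (Suc k) (tau \<theta> (Suc k) u) = u" using t f(2) by simp
  moreover have "tau \<theta> (Suc k) u \<in> A (Suc k)" using t FP by (simp add: A_Suc)
  ultimately show ?case by simp
qed

lemma tau_A: "perm_ok \<theta> \<theta>' \<Longrightarrow> k \<le> s \<Longrightarrow> u \<in> A k \<Longrightarrow> tau \<theta> k u \<in> A k"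
  using tau_closed by blast

lemma tau_inv: "perm_ok \<theta> \<theta>' \<Longrightarrow> k \<le> s \<Longrightarrow> u \<in> A k \<Longrightarrow> tau \<theta>' k (tau \<theta> k u) = u"
  using tau_closed by blast

lemma tau_inj: assumes "perm_ok \<theta> \<theta>'" "k \<le> s" "u \<in> A k" "v \<in> A k" shows "tau \<theta> k u = tau \<theta> k v \<longleftrightarrow> u = v"
proof
  assume "tau \<theta> k u = tau \<theta> k v"
  then have "tau \<theta>' k (tau \<theta> k u) = tau \<theta>' k (tau \<theta> k v)" by simp
  then show "u = v" using tau_inv[OF assms(1,2)] assms(3,4) by simp
qed simp

lemma tau_dec: assumes ok: "perm_ok \<theta> \<theta>'" and ks: "k < s" and u: "u \<in> A (Suc k)"
  shows "dec (Suc k) (tau \<theta> (Suc k) u) = (\<lambda>(x, n). map_option (tau \<theta> k) (dec (Suc k) u (pm \<theta> x, n)))"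
proof -
  have "(\<lambda>(x, n). map_option (tau \<theta> k) (dec (Suc k) u (pm \<theta> x, n))) \<in> PF k"
    by (rule tau_F_PF[OF ok]) (use tau_A[OF ok] ks A_SucE[OF ks u] in auto)
  then show ?thesis by (simp add: dec_en[OF ks])
qed

end



context bm begin

lemma PF_facts:
  assumes "f \<in> PF k"
  shows "\<And>x n. f (x, n) \<noteq> None \<Longrightarrow> x \<in> D k"
    and "\<And>x n v. f (x, n) = Some v \<Longrightarrow> v \<in> A k"
    and "\<And>x y n v. x \<in> D k \<Longrightarrow> y \<in> D k \<Longrightarrow> nle y x \<Longrightarrow> f (x, n) = Some v \<Longrightarrow> f (y, n) = Some v"
    and "\<And>P n. is_path (D k) nle P \<Longrightarrow> \<exists>x\<in>P. f (x, n) \<noteq> None"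
  using assms unfolding PF_iff by blast+

lemma map_PF:
  assumes cl: "\<And>v. v \<in> A k \<Longrightarrow> g v \<in> A k" and f: "f \<in> PF k"
  shows "(\<lambda>xn. map_option g (f xn)) \<in> PF k"
  unfolding PF_iff
proof (intro conjI allI impI ballI)
  fix x n assume "map_option g (f (x, n)) \<noteq> None"
  then show "x \<in> D k" using PF_facts(1)[OF f] by simp
next
  fix x n v assume "map_option g (f (x, n)) = Some v"
  then obtain w where "f (x, n) = Some w" "v = g w" by auto
  then show "v \<in> A k" using PF_facts(2)[OF f] cl by blast
next
  fix x y n v assume xy: "x \<in> D k" "y \<in> D k" "nle y x" and "map_option g (f (x, n)) = Some v"
  then obtain w where "f (x, n) = Some w" "v = g w" by auto
  then show "map_option g (f (y, n)) = Some v" using PF_facts(3)[OF f xy] by simp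
next
  fix P n assume "is_path (D k) nle P"
  then show "\<exists>x\<in>P. map_option g (f (x, n)) \<noteq> None" using PF_facts(4)[OF f] by simp
qed

lemma Khat_A: "Khat k \<in> A k"
proof (induction k)
  case 0 then show ?case by (simp add: A0)
next
  case (Suc k) then show ?case using const_PF[OF Suc] by (simp add: A_Suc)
qed

lemma Khat_dec: "k < s \<Longrightarrow> dec (Suc k) (Khat (Suc k)) = (\<lambda>(x, n). if x \<in> D k then Some (Khat k) else None)"
  using dec_en const_PF[OF Khat_A] by simp

lemma Sf_A: "k \<le> s \<Longrightarrow> u \<in> A k \<Longrightarrow> Sf k u \<in> A k"
proof (induction k arbitrary: u)
  case 0 then show ?case by (simp add: A0)
next
  case (Suc k)
  have ks: "k < s" using Suc.prems by simp
  have f: "dec (Suc k) u \<in> PF k" using A_SucE[OF ks Suc.prems(2)] by simp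
  have cl: "\<And>v. v \<in> A k \<Longrightarrow> Sf k v \<in> A k" using Suc.IH ks by simp
  show ?case using map_PF[OF cl f] by (simp add: A_Suc)
qed

lemma Sf_dec: assumes ks: "k < s" and u: "u \<in> A (Suc k)"
  shows "dec (Suc k) (Sf (Suc k) u) = (\<lambda>xn. map_option (Sf k) (dec (Suc k) u xn))"
proof -
  have f: "dec (Suc k) u \<in> PF k" using A_SucE[OF ks u] by simp
  have cl: "\<And>v. v \<in> A k \<Longrightarrow> Sf k v \<in> A k" using Sf_A ks by simp
  show ?thesis using map_PF[OF cl f] dec_en[OF ks] by simp
qed

lemma tau_Khat: assumes ok: "perm_ok \<theta> \<theta>'" shows "k \<le> s \<Longrightarrow> tau \<theta> k (Khat k) = Khat k"
proof (induction k)
  case 0 then show ?case by simp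
next
  case (Suc k)
  have ks: "k < s" using Suc.prems by simp
  have IH: "tau \<theta> k (Khat k) = Khat k" using Suc.IH ks by simp
  have "tau \<theta> (Suc k) (Khat (Suc k)) =
      en (\<lambda>(x, n). map_option (tau \<theta> k) (if pm \<theta> x \<in> D k then Some (Khat k) else None))"
    by (simp add: Khat_dec[OF ks] del: Khat.simps)
  also have "(\<lambda>(x, n). map_option (tau \<theta> k) (if pm \<theta> x \<in> D k then Some (Khat k) else None))
     = (\<lambda>(x, n). if x \<in> D k then Some (Khat k) else None)"
    by (intro ext, clarify) (simp add: pm_D[OF ok] IH)
  finally show ?case by simp
qed

lemma tau_Sf: assumes ok: "perm_ok \<theta> \<theta>'" shows "k \<le> s \<Longrightarrow> u \<in> A k \<Longrightarrow> tau \<theta> k (Sf k u) = Sf k (tau \<theta> k u)"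
proof (induction k arbitrary: u)
  case 0 then show ?case by simp
next
  case (Suc k)
  have ks: "k < s" using Suc.prems by simp
  have f: "dec (Suc k) u \<in> PF k" using A_SucE[OF ks Suc.prems(2)] by simp
  have IH: "\<And>v. v \<in> A k \<Longrightarrow> tau \<theta> k (Sf k v) = Sf k (tau \<theta> k v)" using Suc.IH ks by simp
  have td: "dec (Suc k) (tau \<theta> (Suc k) u) = (\<lambda>(x, n). map_option (tau \<theta> k) (dec (Suc k) u (pm \<theta> x, n)))"
    by (rule tau_dec[OF ok ks Suc.prems(2)])
  have "tau \<theta> (Suc k) (Sf (Suc k) u) =
     en (\<lambda>(x, n). map_option (tau \<theta> k) (map_option (Sf k) (dec (Suc k) u (pm \<theta> x, n))))"
    by (simp add: Sf_dec[OF ks Suc.prems(2)] del: Sf.simps)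
  also have "\<dots> = en (\<lambda>(x, n). map_option (Sf k) (map_option (tau \<theta> k) (dec (Suc k) u (pm \<theta> x, n))))"
  proof (rule arg_cong[where f = en], intro ext, clarify)
    fix x n show "map_option (tau \<theta> k) (map_option (Sf k) (dec (Suc k) u (pm \<theta> x, n))) =
         map_option (Sf k) (map_option (tau \<theta> k) (dec (Suc k) u (pm \<theta> x, n)))"
    proof (cases "dec (Suc k) u (pm \<theta> x, n)")
      case None then show ?thesis by simp
    next
      case (Some v) then show ?thesis using IH PF_facts(2)[OF f Some] by simp
    qed
  qed
  also have "\<dots> = Sf (Suc k) (tau \<theta> (Suc k) u)"
  proof -
    have "Sf (Suc k) (tau \<theta> (Suc k) u) = en (\<lambda>xn. map_option (Sf k) (dec (Suc k) (tau \<theta> (Suc k) u) xn))"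
      by simp
    also have "\<dots> = en (\<lambda>(x, n). map_option (Sf k) (map_option (tau \<theta> k) (dec (Suc k) u (pm \<theta> x, n))))"
      by (simp only: td case_prod_unfold)
    finally show ?thesis by simp
  qed
  finally show ?case .
qed

lemma tau_id: assumes ok: "perm_ok \<theta> \<theta>'"
  shows "k \<le> s \<Longrightarrow> \<forall>i<k. \<forall>n v. \<theta> i n v = v \<Longrightarrow> u \<in> A k \<Longrightarrow> tau \<theta> k u = u"
proof (induction k arbitrary: u)
  case 0 then show ?case by simp
next
  case (Suc k)
  have ks: "k < s" using Suc.prems by simp
  have f: "dec (Suc k) u \<in> PF k" "en (dec (Suc k) u) = u" using A_SucE[OF ks Suc.prems(3)] by simp_all
  have IH: "\<And>v. v \<in> A k \<Longrightarrow> tau \<theta> k v = v" using Suc.IH ks Suc.prems(2) by simp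
  have pmx: "pm \<theta> x = x" if "x \<in> D k" for x
  proof (rule nth_equalityI)
    fix i assume "i < length (pm \<theta> x)"
    then have i: "i < Suc k" "i < length x" using that by (simp_all add: D_iff)
    show "pm \<theta> x ! i = x ! i" using i Suc.prems(2) by (simp add: cm_def map_nth)
  qed simp
  have "(\<lambda>(x, n). map_option (tau \<theta> k) (dec (Suc k) u (pm \<theta> x, n))) = dec (Suc k) u"
  proof (intro ext, clarify)
    fix x n
    show "map_option (tau \<theta> k) (dec (Suc k) u (pm \<theta> x, n)) = dec (Suc k) u (x, n)"
    proof (cases "x \<in> D k")
      case True
      show ?thesis
      proof (cases "dec (Suc k) u (x, n)")
        case None then show ?thesis using True pmx by simp
      next
        case (Some v) then show ?thesis using True pmx IH PF_facts(2)[OF f(1) Some] by simp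
      qed
    next
      case False
      then have "pm \<theta> x \<notin> D k" using pm_D[OF ok] by simp
      then have "dec (Suc k) u (pm \<theta> x, n) = None" "dec (Suc k) u (x, n) = None"
        using False PF_facts(1)[OF f(1)] by blast+
      then show ?thesis by simp
    qed
  qed
  then show ?case using f(2) by simp
qed

lemma nu_PF: assumes k1: "1 \<le> k" and xi: "\<xi> \<in> C k" shows "nu k \<xi> \<in> PF (k - 1)"
proof -
  obtain k' where k': "k = Suc k'" using k1 by (cases k) auto
  have bij: "\<And>n. bij_betw (\<xi> n) (A k') (A k')" using xi by (simp add: C_def k')
  have nuv: "nu k \<xi> (x, n) = (if x \<in> D k' \<and> n < lh x then Some (\<xi> n ((x ! k') ! n)) else None)" for x n
    by (simp add: nu_def k')
  show ?thesis unfolding k' diff_Suc_1 PF_iff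
  proof (intro conjI allI impI ballI)
    fix x n assume "nu (Suc k') \<xi> (x, n) \<noteq> None" then show "x \<in> D k'" using nuv k' by (auto split: if_splits)
  next
    fix x n v assume a: "nu (Suc k') \<xi> (x, n) = Some v"
    then have x: "x \<in> D k'" "n < lh x" and v: "v = \<xi> n ((x ! k') ! n)" using nuv k' by (auto split: if_splits)
    have "(x ! k') ! n \<in> set (x ! k')" using x by (simp add: D_iff)
    moreover have "set (x ! k') \<subseteq> A k'" using x(1) by (simp add: D_iff)
    ultimately have "(x ! k') ! n \<in> A k'" by blast
    then show "v \<in> A k'" using v bij bij_betwE by blast
  next
    fix x y n v assume xy: "x \<in> D k'" "y \<in> D k'" "nle y x" and a: "nu (Suc k') \<xi> (x, n) = Some v"
    then have n: "n < lh x" and v: "v = \<xi> n ((x ! k') ! n)" using nuv k' by (auto split: if_splits)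
    have "length x = Suc k'" using xy(1) by (simp add: D_iff)
    then have "lh x \<le> lh y" using nle_lh[OF xy(3)] by simp
    moreover have "prefix (x ! k') (y ! k')" using xy by (simp add: nle_def D_iff)
    moreover have "n < length (x ! k')" using n xy(1) by (simp add: D_iff)
    ultimately have "(y ! k') ! n = (x ! k') ! n" "n < lh y" using n by (auto simp: prefix_nth_iff)
    then show "nu (Suc k') \<xi> (y, n) = Some v" using nuv k' xy v by simp
  next
    fix P n assume "is_path (D k') nle P"
    then obtain x where "x \<in> P" "n < lh x" using path_long by blast
    moreover have "x \<in> D k'" using \<open>is_path (D k') nle P\<close> \<open>x \<in> P\<close> by (auto simp: is_path_def)
    ultimately show "\<exists>x\<in>P. nu (Suc k') \<xi> (x, n) \<noteq> None" using nuv k' by auto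
  qed
qed

lemma L_A: assumes "1 \<le> k" shows "L k \<subseteq> A k"
proof
  fix u assume "u \<in> L k"
  then obtain \<xi> where xi: "\<xi> \<in> C k" "u = en (nu k \<xi>)" by (auto simp: L_def)
  obtain k' where k': "k = Suc k'" using assms by (cases k) auto
  have "nu k \<xi> \<in> PF k'" using nu_PF[OF assms xi(1)] k' by simp
  then show "u \<in> A k" using xi k' by (simp add: A_Suc)
qed

lemma B_A: "B k \<subseteq> A k" by (auto simp: B_def)

end



context bm begin

lemma tau_B: assumes ok: "perm_ok \<theta> \<theta>'" and k: "1 \<le> k" "k \<le> s" and u: "u \<in> B k"
  shows "tau \<theta> k u \<in> B k"
proof -
  obtain k' where k': "k = Suc k'" using k by (cases k) auto
  have ks: "k' < s" using k k' by simp
  have uA: "u \<in> A (Suc k')" using u k' by (simp add: B_def)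
  have ur: "\<And>n. dec (Suc k') u (replicate (Suc k') [], n) \<noteq> None" using u k' by (simp add: B_def)
  define r :: "'u list list" where "r = replicate (Suc k') []"
  have pr: "pm \<theta> r = r" unfolding r_def by (rule pm_nil)
  have "dec (Suc k') (tau \<theta> (Suc k') u) (r, n) = map_option (tau \<theta> k') (dec (Suc k') u (pm \<theta> r, n))" for n
    by (simp only: tau_dec[OF ok ks uA] case_prod_conv)
  then have "dec (Suc k') (tau \<theta> (Suc k') u) (replicate (Suc k') [], n) \<noteq> None" for n
    using ur[of n] pr by (simp add: r_def del: replicate_Suc)
  moreover have "tau \<theta> (Suc k') u \<in> A (Suc k')" using tau_A[OF ok _ uA] ks by simp
  ultimately show ?thesis using k' by (simp add: B_def del: replicate_Suc)
qed

lemma bij_theta: "perm_ok \<theta> \<theta>' \<Longrightarrow> bij_betw (\<theta> i n) (A i) (A i)"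
  using perm_ok_sym[of \<theta> \<theta>']
  by (intro bij_betw_byWitness[where f' = "\<theta>' i n"]) (auto simp: perm_ok_def)

lemma bij_tau: assumes ok: "perm_ok \<theta> \<theta>'" and k: "k \<le> s" shows "bij_betw (tau \<theta> k) (A k) (A k)"
proof (rule bij_betw_byWitness[where f' = "tau \<theta>' k"])
  show "\<forall>a\<in>A k. tau \<theta>' k (tau \<theta> k a) = a" using tau_inv[OF ok k] by simp
  show "\<forall>a'\<in>A k. tau \<theta> k (tau \<theta>' k a') = a'" using tau_inv[OF perm_ok_sym[OF ok] k] by simp
  show "tau \<theta> k ` A k \<subseteq> A k" using tau_A[OF ok k] by auto
  show "tau \<theta>' k ` A k \<subseteq> A k" using tau_A[OF perm_ok_sym[OF ok] k] by auto
qed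

lemma tau_L: assumes ok: "perm_ok \<theta> \<theta>'" and k: "1 \<le> k" "k \<le> s" and u: "u \<in> L k"
  shows "tau \<theta> k u \<in> L k"
proof -
  obtain k' where k': "k = Suc k'" using k by (cases k) auto
  have ks: "k' < s" using k k' by simp
  obtain \<xi> where xi: "\<xi> \<in> C k" "u = en (nu k \<xi>)" using u by (auto simp: L_def)
  have nP: "nu k \<xi> \<in> PF k'" using nu_PF[OF k(1) xi(1)] k' by simp
  have nP': "nu (Suc k') \<xi> \<in> PF k'" using nP k' by simp
  have uA: "u \<in> A (Suc k')" using L_A[OF k(1)] u k' by auto
  define \<xi>' where "\<xi>' n v = tau \<theta> k' (\<xi> n (\<theta> k' n v))" for n v
  have "\<xi>' \<in> C k" unfolding C_def
  proof (intro CollectI allI)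
    fix n
    have e: "\<xi>' n = tau \<theta> k' \<circ> \<xi> n \<circ> \<theta> k' n" by (simp add: fun_eq_iff \<xi>'_def)
    have b1: "bij_betw (\<xi> n) (A k') (A k')" using xi(1) k' by (simp add: C_def)
    show "bij_betw (\<xi>' n) (A (k - 1)) (A (k - 1))" unfolding e k' diff_Suc_1
      by (rule bij_betw_trans[OF bij_theta[OF ok] bij_betw_trans[OF b1 bij_tau[OF ok]]]) (use ks in simp)
  qed
  moreover have "tau \<theta> k u = en (nu k \<xi>')"
  proof -
    have "tau \<theta> k u = en (\<lambda>(x, n). map_option (tau \<theta> k') (nu k \<xi> (pm \<theta> x, n)))"
      using xi(2) k' dec_en[OF ks nP'] by simp
    also have "(\<lambda>(x, n). map_option (tau \<theta> k') (nu k \<xi> (pm \<theta> x, n))) = nu k \<xi>'"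
    proof (intro ext, clarify)
      fix x n
      show "map_option (tau \<theta> k') (nu k \<xi> (pm \<theta> x, n)) = nu k \<xi>' (x, n)"
      proof (cases "x \<in> D k' \<and> n < lh x")
        case True
        then have x: "x \<in> D k'" "n < lh x" by auto
        have px: "pm \<theta> x \<in> D k'" using x pm_D[OF ok] by simp
        have lp: "lh (pm \<theta> x) = lh x" using lh_pm_D[OF x(1)] .
        have lx: "length x = Suc k'" "length (x ! k') = lh x" using x(1) by (simp_all add: D_iff)
        have "pm \<theta> x ! k' ! n = \<theta> k' n (x ! k' ! n)" using lx x(2) by simp
        then show ?thesis using x px lp by (simp add: nu_def k' \<xi>'_def)
      next
        case False
        then have "\<not> (pm \<theta> x \<in> D k' \<and> n < lh (pm \<theta> x))"
          using pm_D[OF ok] lh_pm_D by metis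
        then show ?thesis using False by (simp add: nu_def k')
      qed
    qed
    finally show ?thesis .
  qed
  ultimately show ?thesis by (auto simp: L_def)
qed

lemma vdom_A: "valid_var s v \<Longrightarrow> vdom v \<subseteq> A (vtype v)"
proof (cases v)
  case (fields kd n i) then show "valid_var s v \<Longrightarrow> vdom v \<subseteq> A (vtype v)"
    using B_A L_A by (cases kd) auto
qed

lemma tau_vdom: assumes "valid_var s v" "perm_ok \<theta> \<theta>'" "c \<in> vdom v"
  shows "tau \<theta> (vtype v) c \<in> vdom v"
proof (cases v)
  case (fields kd n i) then show ?thesis using assms
    using tau_A tau_B tau_L by (cases kd) auto
qed

lemma vdom_surj: assumes "valid_var s v" "perm_ok \<theta> \<theta>'" "c \<in> vdom v"
  shows "\<exists>c'\<in>vdom v. tau \<theta> (vtype v) c' = c"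
proof
  show "tau \<theta>' (vtype v) c \<in> vdom v" by (rule tau_vdom[OF assms(1) perm_ok_sym[OF assms(2)] assms(3)])
  obtain kd n i where v: "v = (kd, n, i)" by (cases v)
  have "vtype v \<le> s" using assms(1) v by (cases kd) auto
  moreover have "c \<in> A (vtype v)" using vdom_A[OF assms(1)] assms(3) by auto
  ultimately show "tau \<theta> (vtype v) (tau \<theta>' (vtype v) c) = c" using tau_inv[OF perm_ok_sym[OF assms(2)]] by simp
qed

end



context bm begin

lemma ty_le: "ty s t = Some k \<Longrightarrow> k \<le> s"
  by (induction t arbitrary: k) (auto split: if_splits elim: valid_var.elims)

lemma ty_valid: "ty s t = Some k \<Longrightarrow> v \<in> fvt t \<Longrightarrow> valid_var s v"
  by (induction t arbitrary: k) (auto split: if_splits)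

lemma ev_tau:
  assumes ok: "perm_ok \<theta> \<theta>'" and a: "\<alpha> \<in> D (s - 1)"
  shows "ty s t = Some k \<Longrightarrow> (\<forall>v\<in>fvt t. \<rho> v \<in> vdom v) \<Longrightarrow>
    (\<forall>u. ev \<alpha> \<rho> t = Some u \<longrightarrow> u \<in> A k) \<and>
    ev (pm \<theta>' \<alpha>) (\<lambda>v. tau \<theta> (vtype v) (\<rho> v)) t = map_option (tau \<theta> k) (ev \<alpha> \<rho> t)"
proof (induction t arbitrary: k)
  case (TVar v)
  then have "valid_var s v" "k = vtype v" by (auto split: if_splits)
  moreover have "\<rho> v \<in> vdom v" using TVar.prems(2) by simp
  ultimately have "\<rho> v \<in> A k" using vdom_A by blast
  then show ?case using \<open>k = vtype v\<close> by simp
next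
  case TZero then show ?case by (simp add: A0)
next
  case (TK n)
  then have "k = n" "n \<le> s" by (auto split: if_splits)
  then show ?case using Khat_A tau_Khat[OF ok] by simp
next
  case (TSuc t)
  then have k: "k = 0" and t: "ty s t = Some 0" by (auto split: if_splits)
  have "ev (pm \<theta>' \<alpha>) (\<lambda>v. tau \<theta> (vtype v) (\<rho> v)) t = ev \<alpha> \<rho> t"
    using TSuc.IH[OF t] TSuc.prems(2) by (simp add: option.map_ident)
  then show ?case using k by (auto simp: A0 option.map_ident)
next
  case (TPlus t1 t2)
  then have k: "k = 0" and t: "ty s t1 = Some 0" "ty s t2 = Some 0" by (auto split: if_splits)
  have "ev (pm \<theta>' \<alpha>) (\<lambda>v. tau \<theta> (vtype v) (\<rho> v)) t1 = ev \<alpha> \<rho> t1"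
    using TPlus.IH(1)[OF t(1)] TPlus.prems(2) by (simp add: option.map_ident)
  moreover have "ev (pm \<theta>' \<alpha>) (\<lambda>v. tau \<theta> (vtype v) (\<rho> v)) t2 = ev \<alpha> \<rho> t2"
    using TPlus.IH(2)[OF t(2)] TPlus.prems(2) by (simp add: option.map_ident)
  ultimately show ?case using k by (simp add: A0 option.map_ident split: option.splits)
next
  case (TTimes t1 t2)
  then have k: "k = 0" and t: "ty s t1 = Some 0" "ty s t2 = Some 0" by (auto split: if_splits)
  have "ev (pm \<theta>' \<alpha>) (\<lambda>v. tau \<theta> (vtype v) (\<rho> v)) t1 = ev \<alpha> \<rho> t1"
    using TTimes.IH(1)[OF t(1)] TTimes.prems(2) by (simp add: option.map_ident)
  moreover have "ev (pm \<theta>' \<alpha>) (\<lambda>v. tau \<theta> (vtype v) (\<rho> v)) t2 = ev \<alpha> \<rho> t2"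
    using TTimes.IH(2)[OF t(2)] TTimes.prems(2) by (simp add: option.map_ident)
  ultimately show ?case using k by (simp add: A0 option.map_ident split: option.splits)
next
  case (TN n z)
  then have k: "k = n" and z: "ty s z = Some n" by (auto split: if_splits)
  have ns: "n \<le> s" using ty_le[OF z] .
  have IH: "\<forall>u. ev \<alpha> \<rho> z = Some u \<longrightarrow> u \<in> A n"
    "ev (pm \<theta>' \<alpha>) (\<lambda>v. tau \<theta> (vtype v) (\<rho> v)) z = map_option (tau \<theta> n) (ev \<alpha> \<rho> z)"
    using TN.IH[OF z] TN.prems(2) by simp_all
  show ?case
  proof (cases "ev \<alpha> \<rho> z")
    case None then show ?thesis using IH by simp
  next
    case (Some u)
    then have u: "u \<in> A n" using IH by simp
    then show ?thesis using Some IH k Sf_A[OF ns u] tau_Sf[OF ok ns u] by simp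
  qed
next
  case (TAp n z t)
  then have n1: "1 \<le> n" and k: "k = n - 1" and z: "ty s z = Some n" and t: "ty s t = Some 0"
    by (auto split: if_splits)
  have ns: "n \<le> s" using ty_le[OF z] .
  obtain n' where n': "n = Suc n'" using n1 by (cases n) auto
  have ns': "n' < s" using ns n' by simp
  have IHz: "\<forall>u. ev \<alpha> \<rho> z = Some u \<longrightarrow> u \<in> A n"
    "ev (pm \<theta>' \<alpha>) (\<lambda>v. tau \<theta> (vtype v) (\<rho> v)) z = map_option (tau \<theta> n) (ev \<alpha> \<rho> z)"
    using TAp.IH(1)[OF z] TAp.prems(2) by simp_all
  have IHt: "ev (pm \<theta>' \<alpha>) (\<lambda>v. tau \<theta> (vtype v) (\<rho> v)) t = ev \<alpha> \<rho> t"
    using TAp.IH(2)[OF t] TAp.prems(2) by (simp add: option.map_ident)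
  show ?case
  proof (cases "ev \<alpha> \<rho> z")
    case None then show ?thesis using IHz IHt by simp
  next
    case (Some f)
    then have f: "f \<in> A (Suc n')" using IHz n' by simp
    show ?thesis
    proof (cases "ev \<alpha> \<rho> t")
      case None then show ?thesis using IHz IHt Some by simp
    next
      case (Some m)
      have fP: "dec (Suc n') f \<in> PF n'" using A_SucE[OF ns' f] by simp
      have tk: "take n (pm \<theta>' \<alpha>) = pm \<theta>' (take n \<alpha>)" by (rule take_pm)
      have pp: "pm \<theta> (pm \<theta>' (take n \<alpha>)) = take n \<alpha>" using pm_pm[OF perm_ok_sym[OF ok]] by simp
      have "dec (Suc n') (tau \<theta> (Suc n') f) (take n (pm \<theta>' \<alpha>), ndec m) =
            map_option (tau \<theta> n') (dec (Suc n') f (take n \<alpha>, ndec m))"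
        by (simp only: tau_dec[OF ok ns' f] case_prod_conv tk pp)
      moreover have "\<forall>u. dec (Suc n') f (take n \<alpha>, ndec m) = Some u \<longrightarrow> u \<in> A n'"
        using PF_facts(2)[OF fP] by blast
      ultimately show ?thesis using IHz IHt \<open>ev \<alpha> \<rho> z = Some f\<close> Some n' k by simp
    qed
  qed
qed

lemma ev_cong: "(\<forall>v\<in>fvt t. \<rho> v = \<rho>2 v) \<Longrightarrow> ev \<alpha> \<rho> t = ev \<alpha> \<rho>2 t"
  by (induction t) auto

lemma forces_cong: "(\<forall>v\<in>fv \<phi>. \<rho> v = \<rho>2 v) \<Longrightarrow> forces s' \<phi> \<rho> \<alpha> = forces s' \<phi> \<rho>2 \<alpha>"
proof (induction \<phi> arbitrary: \<rho> \<rho>2 \<alpha>)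
  case (Eq k x y)
  then have "ev b \<rho> x = ev b \<rho>2 x" "ev b \<rho> y = ev b \<rho>2 y" for b using ev_cong[of x \<rho> \<rho>2] ev_cong[of y \<rho> \<rho>2] by auto
  then show ?case by simp
next
  case (Prov z \<phi>)
  then have "ev b \<rho> z = ev b \<rho>2 z" for b using ev_cong[of z \<rho> \<rho>2] by auto
  moreover have "forces s' \<phi> \<rho> g = forces s' \<phi> \<rho>2 g" for g using Prov by auto
  ultimately show ?case by simp
next
  case (Conj \<phi>1 \<phi>2)
  have h1: "forces s' \<phi>1 \<rho> b = forces s' \<phi>1 \<rho>2 b" for b by (rule Conj.IH(1)) (use Conj.prems in auto)
  have h2: "forces s' \<phi>2 \<rho> b = forces s' \<phi>2 \<rho>2 b" for b by (rule Conj.IH(2)) (use Conj.prems in auto)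
  show ?case by (simp add: h1 h2)
next
  case (Disj \<phi>1 \<phi>2)
  have h1: "forces s' \<phi>1 \<rho> b = forces s' \<phi>1 \<rho>2 b" for b by (rule Disj.IH(1)) (use Disj.prems in auto)
  have h2: "forces s' \<phi>2 \<rho> b = forces s' \<phi>2 \<rho>2 b" for b by (rule Disj.IH(2)) (use Disj.prems in auto)
  show ?case by (simp add: h1 h2)
next
  case (Imp \<phi>1 \<phi>2)
  have h1: "forces s' \<phi>1 \<rho> b = forces s' \<phi>1 \<rho>2 b" for b by (rule Imp.IH(1)) (use Imp.prems in auto)
  have h2: "forces s' \<phi>2 \<rho> b = forces s' \<phi>2 \<rho>2 b" for b by (rule Imp.IH(2)) (use Imp.prems in auto)
  show ?case by (simp add: h1 h2)
next
  case (All v \<phi>)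
  have "forces s' \<phi> (\<rho>(v := c)) b = forces s' \<phi> (\<rho>2(v := c)) b" for c b
    by (rule All.IH) (use All.prems in auto)
  then show ?case by simp
next
  case (Ex v \<phi>)
  have "forces s' \<phi> (\<rho>(v := c)) b = forces s' \<phi> (\<rho>2(v := c)) b" for c b
    by (rule Ex.IH) (use Ex.prems in auto)
  then show ?case by simp
qed auto

end



context bm begin

lemma tau0: "tau \<theta> 0 = (\<lambda>u. u)" by (rule ext) simp

lemma path_tr:
  assumes ok: "perm_ok \<theta> \<theta>'" and a: "\<alpha> \<in> D k"
    and QQ: "\<And>\<beta>. \<beta> \<in> D k \<Longrightarrow> Q \<beta> \<longleftrightarrow> Q' (pm \<theta>' \<beta>)"
  shows "(\<forall>P. is_path (D k) nle P \<and> \<alpha> \<in> P \<longrightarrow> (\<exists>\<beta>\<in>P. Q \<beta>)) \<longleftrightarrow>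
         (\<forall>P. is_path (D k) nle P \<and> pm \<theta>' \<alpha> \<in> P \<longrightarrow> (\<exists>\<beta>\<in>P. Q' \<beta>))"
proof -
  have okS: "perm_ok \<theta>' \<theta>" by (rule perm_ok_sym[OF ok])
  have p1: "\<And>x. pm \<theta>' (pm \<theta> x) = x" using pm_pm[OF ok] by simp
  have p2: "\<And>x. pm \<theta> (pm \<theta>' x) = x" using pm_pm[OF okS] by simp
  show ?thesis
  proof (intro iffI allI impI)
    fix P' assume L: "\<forall>P. is_path (D k) nle P \<and> \<alpha> \<in> P \<longrightarrow> (\<exists>\<beta>\<in>P. Q \<beta>)"
      and P': "is_path (D k) nle P' \<and> pm \<theta>' \<alpha> \<in> P'"
    have "is_path (D k) nle (pm \<theta> ` P')" using pm_path[OF ok] P' by blast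
    moreover have "\<alpha> \<in> pm \<theta> ` P'" using P' p2[of \<alpha>] by (metis imageI)
    ultimately obtain \<beta> where b: "\<beta> \<in> pm \<theta> ` P'" "Q \<beta>" using L by blast
    then obtain \<beta>0 where b0: "\<beta>0 \<in> P'" "\<beta> = pm \<theta> \<beta>0" by auto
    have "\<beta>0 \<in> D k" using P' b0 by (auto simp: is_path_def)
    then have "\<beta> \<in> D k" using b0 pm_D[OF ok] by simp
    then have "Q' (pm \<theta>' \<beta>)" using QQ b by blast
    then show "\<exists>\<beta>\<in>P'. Q' \<beta>" using b0 p1 by auto
  next
    fix P assume R: "\<forall>P. is_path (D k) nle P \<and> pm \<theta>' \<alpha> \<in> P \<longrightarrow> (\<exists>\<beta>\<in>P. Q' \<beta>)"
      and P: "is_path (D k) nle P \<and> \<alpha> \<in> P"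
    have "is_path (D k) nle (pm \<theta>' ` P)" using pm_path[OF okS] P by blast
    moreover have "pm \<theta>' \<alpha> \<in> pm \<theta>' ` P" using P by blast
    ultimately obtain \<beta>' where b: "\<beta>' \<in> pm \<theta>' ` P" "Q' \<beta>'" using R by blast
    then obtain \<beta> where b0: "\<beta> \<in> P" "\<beta>' = pm \<theta>' \<beta>" by auto
    have "\<beta> \<in> D k" using P b0 by (auto simp: is_path_def)
    then have "Q \<beta>" using QQ[OF \<open>\<beta> \<in> D k\<close>] b(2) b0(2) by simp
    then show "\<exists>\<beta>\<in>P. Q \<beta>" using b0 by auto
  qed
qed

lemma ex_tr:
  assumes ok: "perm_ok \<theta> \<theta>'"
    and QQ: "\<And>\<beta>. \<beta> \<in> D k \<Longrightarrow> Q \<beta> \<longleftrightarrow> Q' (pm \<theta>' \<beta>)"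
  shows "(\<exists>\<beta>\<in>D k. Q \<beta>) \<longleftrightarrow> (\<exists>\<beta>\<in>D k. Q' \<beta>)"
proof
  assume "\<exists>\<beta>\<in>D k. Q \<beta>"
  then obtain \<beta> where "\<beta> \<in> D k" "Q \<beta>" by blast
  moreover have "pm \<theta>' \<beta> \<in> D k" using \<open>\<beta> \<in> D k\<close> pm_D[OF perm_ok_sym[OF ok]] by simp
  ultimately show "\<exists>\<beta>\<in>D k. Q' \<beta>" using QQ by blast
next
  assume "\<exists>\<beta>\<in>D k. Q' \<beta>"
  then obtain \<beta> where b: "\<beta> \<in> D k" "Q' \<beta>" by blast
  have e: "pm \<theta>' (pm \<theta> \<beta>) = \<beta>" using pm_pm[OF ok] by simp
  have "pm \<theta> \<beta> \<in> D k" using b pm_D[OF ok] by simp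
  moreover then have "Q (pm \<theta> \<beta>)" using QQ b e by simp
  ultimately show "\<exists>\<beta>\<in>D k. Q \<beta>" by blast
qed

lemma all_tr:
  assumes ok: "perm_ok \<theta> \<theta>'"
    and QQ: "\<And>\<beta>. \<beta> \<in> D k \<Longrightarrow> Q \<beta> \<longleftrightarrow> Q' (pm \<theta>' \<beta>)"
  shows "(\<forall>\<beta>\<in>D k. Q \<beta>) \<longleftrightarrow> (\<forall>\<beta>\<in>D k. Q' \<beta>)"
  using ex_tr[OF ok, of k "\<lambda>b. \<not> Q b" "\<lambda>b. \<not> Q' b"] QQ by blast

lemma opt_inj:
  assumes "\<forall>u. a = Some u \<longrightarrow> u \<in> S" "\<forall>u. b = Some u \<longrightarrow> u \<in> S" "inj_on f S"
  shows "map_option f a = map_option f b \<longleftrightarrow> a = b"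
  using assms by (cases a; cases b) (auto dest: inj_onD)

lemma tau_fun_upd: "(\<lambda>w. tau \<theta> (vtype w) ((\<rho>(v := c)) w)) = (\<lambda>w. tau \<theta> (vtype w) (\<rho> w))(v := tau \<theta> (vtype v) c)"
  by (rule ext) simp

lemma valid_le: "valid_var s v \<Longrightarrow> vtype v \<le> s"
proof -
  obtain kd n i where v: "v = (kd, n, i)" by (cases v)
  show "valid_var s v \<Longrightarrow> vtype v \<le> s" using v by (cases kd) auto
qed

lemma forces_tau:
  assumes ok: "perm_ok \<theta> \<theta>'"
  shows "wf s b \<phi> \<Longrightarrow> \<alpha> \<in> D (s - 1) \<Longrightarrow> (\<forall>v\<in>fv \<phi>. \<rho> v \<in> vdom v) \<Longrightarrow>
    forces s \<phi> \<rho> \<alpha> \<longleftrightarrow> forces s \<phi> (\<lambda>v. tau \<theta> (vtype v) (\<rho> v)) (pm \<theta>' \<alpha>)"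
proof (induction \<phi> arbitrary: b \<rho> \<alpha>)
  case Bot then show ?case by simp
next
  case (Eq k x y)
  have tx: "ty s x = Some k" and ty': "ty s y = Some k" using Eq.prems by auto
  have ks: "k \<le> s" using ty_le[OF tx] .
  let ?\<rho>' = "\<lambda>v. tau \<theta> (vtype v) (\<rho> v)"
  have "(ev \<beta> \<rho> x \<noteq> None \<and> ev \<beta> \<rho> x = ev \<beta> \<rho> y) \<longleftrightarrow>
        (ev (pm \<theta>' \<beta>) ?\<rho>' x \<noteq> None \<and> ev (pm \<theta>' \<beta>) ?\<rho>' x = ev (pm \<theta>' \<beta>) ?\<rho>' y)"
    if b: "\<beta> \<in> D (s - 1)" for \<beta>
  proof -
    have ex: "\<forall>u. ev \<beta> \<rho> x = Some u \<longrightarrow> u \<in> A k"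
      "ev (pm \<theta>' \<beta>) ?\<rho>' x = map_option (tau \<theta> k) (ev \<beta> \<rho> x)"
      using ev_tau[OF ok b tx, of \<rho>] Eq.prems(3) by simp_all
    have ey: "\<forall>u. ev \<beta> \<rho> y = Some u \<longrightarrow> u \<in> A k"
      "ev (pm \<theta>' \<beta>) ?\<rho>' y = map_option (tau \<theta> k) (ev \<beta> \<rho> y)"
      using ev_tau[OF ok b ty', of \<rho>] Eq.prems(3) by simp_all
    have inj: "inj_on (tau \<theta> k) (A k)" using tau_inj[OF ok ks] by (auto intro: inj_onI)
    show ?thesis using opt_inj[OF ex(1) ey(1) inj] ex(2) ey(2) by simp
  qed
  then show ?case using path_tr[OF ok Eq.prems(2)] by simp
next
  case (Prov z \<phi>)
  have tz: "ty s z = Some 0" and wf\<phi>: "wf s False \<phi>" using Prov.prems by auto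
  let ?\<rho>' = "\<lambda>v. tau \<theta> (vtype v) (\<rho> v)"
  have fv\<phi>: "\<forall>v\<in>fv \<phi>. \<rho> v \<in> vdom v" using Prov.prems(3) by simp
  have "(\<exists>u. ev \<beta> \<rho> z = Some u \<and> (\<exists>\<gamma>\<in>D (s - 1). nle \<beta> \<gamma> \<and> lh \<gamma> = ndec u \<and> forces s \<phi> \<rho> \<gamma>)) \<longleftrightarrow>
        (\<exists>u. ev (pm \<theta>' \<beta>) ?\<rho>' z = Some u \<and> (\<exists>\<gamma>\<in>D (s - 1). nle (pm \<theta>' \<beta>) \<gamma> \<and> lh \<gamma> = ndec u \<and> forces s \<phi> ?\<rho>' \<gamma>))"
    if b: "\<beta> \<in> D (s - 1)" for \<beta>
  proof -
    have ez: "ev (pm \<theta>' \<beta>) ?\<rho>' z = ev \<beta> \<rho> z"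
      using ev_tau[OF ok b tz, of \<rho>] Prov.prems(3) by (simp add: tau0 option.map_ident)
    have "(\<exists>\<gamma>\<in>D (s - 1). nle \<beta> \<gamma> \<and> lh \<gamma> = m \<and> forces s \<phi> \<rho> \<gamma>) \<longleftrightarrow>
          (\<exists>\<gamma>\<in>D (s - 1). nle (pm \<theta>' \<beta>) \<gamma> \<and> lh \<gamma> = m \<and> forces s \<phi> ?\<rho>' \<gamma>)" for m
    proof (rule ex_tr[OF ok])
      fix \<gamma> assume g: "\<gamma> \<in> D (s - 1)"
      have "nle (pm \<theta>' \<beta>) (pm \<theta>' \<gamma>) \<longleftrightarrow> nle \<beta> \<gamma>" using pm_nle[OF perm_ok_sym[OF ok]] by simp
      moreover have "lh (pm \<theta>' \<gamma>) = lh \<gamma>" using lh_pm_D[OF g] .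
      moreover have "forces s \<phi> \<rho> \<gamma> \<longleftrightarrow> forces s \<phi> ?\<rho>' (pm \<theta>' \<gamma>)"
        by (rule Prov.IH[OF wf\<phi> g fv\<phi>])
      ultimately show "(nle \<beta> \<gamma> \<and> lh \<gamma> = m \<and> forces s \<phi> \<rho> \<gamma>) \<longleftrightarrow>
          (nle (pm \<theta>' \<beta>) (pm \<theta>' \<gamma>) \<and> lh (pm \<theta>' \<gamma>) = m \<and> forces s \<phi> ?\<rho>' (pm \<theta>' \<gamma>))" by simp
    qed
    then show ?thesis using ez by simp
  qed
  then show ?case using path_tr[OF ok Prov.prems(2)] by simp
next
  case (Conj \<phi>1 \<phi>2)
  then show ?case by auto
next
  case (Disj \<phi>1 \<phi>2)
  have w: "wf s b \<phi>1" "wf s b \<phi>2" using Disj.prems by auto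
  let ?\<rho>' = "\<lambda>v. tau \<theta> (vtype v) (\<rho> v)"
  have "(forces s \<phi>1 \<rho> \<beta> \<or> forces s \<phi>2 \<rho> \<beta>) \<longleftrightarrow>
        (forces s \<phi>1 ?\<rho>' (pm \<theta>' \<beta>) \<or> forces s \<phi>2 ?\<rho>' (pm \<theta>' \<beta>))" if b: "\<beta> \<in> D (s - 1)" for \<beta>
    using Disj.IH(1)[OF w(1) b] Disj.IH(2)[OF w(2) b] Disj.prems(3) by simp
  then show ?case using path_tr[OF ok Disj.prems(2)] by simp
next
  case (Imp \<phi>1 \<phi>2)
  have w: "wf s b \<phi>1" "wf s b \<phi>2" using Imp.prems by auto
  let ?\<rho>' = "\<lambda>v. tau \<theta> (vtype v) (\<rho> v)"
  have "(nle \<beta> \<alpha> \<longrightarrow> forces s \<phi>1 \<rho> \<beta> \<longrightarrow> forces s \<phi>2 \<rho> \<beta>) \<longleftrightarrow>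
        (nle (pm \<theta>' \<beta>) (pm \<theta>' \<alpha>) \<longrightarrow> forces s \<phi>1 ?\<rho>' (pm \<theta>' \<beta>) \<longrightarrow> forces s \<phi>2 ?\<rho>' (pm \<theta>' \<beta>))"
    if b: "\<beta> \<in> D (s - 1)" for \<beta>
    using Imp.IH(1)[OF w(1) b] Imp.IH(2)[OF w(2) b] Imp.prems(3) pm_nle[OF perm_ok_sym[OF ok]] by simp
  then have "(\<forall>\<beta>\<in>D (s - 1). nle \<beta> \<alpha> \<longrightarrow> forces s \<phi>1 \<rho> \<beta> \<longrightarrow> forces s \<phi>2 \<rho> \<beta>) \<longleftrightarrow>
    (\<forall>\<beta>\<in>D (s - 1). nle \<beta> (pm \<theta>' \<alpha>) \<longrightarrow> forces s \<phi>1 ?\<rho>' \<beta> \<longrightarrow> forces s \<phi>2 ?\<rho>' \<beta>)"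
    by (intro all_tr[OF ok, where Q = "\<lambda>\<beta>. nle \<beta> \<alpha> \<longrightarrow> forces s \<phi>1 \<rho> \<beta> \<longrightarrow> forces s \<phi>2 \<rho> \<beta>"
        and Q' = "\<lambda>\<beta>. nle \<beta> (pm \<theta>' \<alpha>) \<longrightarrow> forces s \<phi>1 ?\<rho>' \<beta> \<longrightarrow> forces s \<phi>2 ?\<rho>' \<beta>"]) simp
  then show ?case by simp
next
  case (All v \<phi>)
  have w: "wf s b \<phi>" and vv: "valid_var s v" using All.prems by auto
  let ?\<rho>' = "\<lambda>v. tau \<theta> (vtype v) (\<rho> v)"
  have "forces s \<phi> (\<rho>(v := c)) \<alpha> \<longleftrightarrow> forces s \<phi> (?\<rho>'(v := tau \<theta> (vtype v) c)) (pm \<theta>' \<alpha>)"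
    if c: "c \<in> vdom v" for c
  proof -
    have "\<forall>w\<in>fv \<phi>. (\<rho>(v := c)) w \<in> vdom w" using All.prems(3) c by auto
    then show ?thesis using All.IH[OF w All.prems(2)] tau_fun_upd[of \<theta> \<rho> v c] by metis
  qed
  moreover have "(\<forall>c\<in>vdom v. Q (tau \<theta> (vtype v) c)) \<longleftrightarrow> (\<forall>c\<in>vdom v. Q c)" for Q
    using tau_vdom[OF vv ok] vdom_surj[OF vv ok] by metis
  ultimately show ?case by simp
next
  case (Ex v \<phi>)
  have w: "wf s b \<phi>" and vv: "valid_var s v" using Ex.prems by auto
  let ?\<rho>' = "\<lambda>v. tau \<theta> (vtype v) (\<rho> v)"
  have eq: "forces s \<phi> (\<rho>(v := c)) \<beta> \<longleftrightarrow> forces s \<phi> (?\<rho>'(v := tau \<theta> (vtype v) c)) (pm \<theta>' \<beta>)"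
    if c: "c \<in> vdom v" and b: "\<beta> \<in> D (s - 1)" for c \<beta>
  proof -
    have "\<forall>w\<in>fv \<phi>. (\<rho>(v := c)) w \<in> vdom w" using Ex.prems(3) c by auto
    then show ?thesis using Ex.IH[OF w b] tau_fun_upd[of \<theta> \<rho> v c] by metis
  qed
  have ex: "(\<exists>c\<in>vdom v. Q (tau \<theta> (vtype v) c)) \<longleftrightarrow> (\<exists>c\<in>vdom v. Q c)" for Q
    using tau_vdom[OF vv ok] vdom_surj[OF vv ok] by metis
  have "(\<exists>c\<in>vdom v. forces s \<phi> (\<rho>(v := c)) \<beta>) \<longleftrightarrow> (\<exists>c\<in>vdom v. forces s \<phi> (?\<rho>'(v := c)) (pm \<theta>' \<beta>))"
    if b: "\<beta> \<in> D (s - 1)" for \<beta>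
  proof -
    have "(\<exists>c\<in>vdom v. forces s \<phi> (\<rho>(v := c)) \<beta>) \<longleftrightarrow>
          (\<exists>c\<in>vdom v. forces s \<phi> (?\<rho>'(v := tau \<theta> (vtype v) c)) (pm \<theta>' \<beta>))"
      using eq[OF _ b] by blast
    also have "\<dots> \<longleftrightarrow> (\<exists>c\<in>vdom v. forces s \<phi> (?\<rho>'(v := c)) (pm \<theta>' \<beta>))"
      by (rule ex)
    finally show ?thesis .
  qed
  then have "(\<forall>P. is_path (D (s - 1)) nle P \<and> \<alpha> \<in> P \<longrightarrow> (\<exists>\<beta>\<in>P. \<exists>c\<in>vdom v. forces s \<phi> (\<rho>(v := c)) \<beta>)) \<longleftrightarrow>
    (\<forall>P. is_path (D (s - 1)) nle P \<and> pm \<theta>' \<alpha> \<in> P \<longrightarrow> (\<exists>\<beta>\<in>P. \<exists>c\<in>vdom v. forces s \<phi> (?\<rho>'(v := c)) \<beta>))"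
    by (intro path_tr[OF ok Ex.prems(2), where Q = "\<lambda>\<beta>. \<exists>c\<in>vdom v. forces s \<phi> (\<rho>(v := c)) \<beta>"
       and Q' = "\<lambda>\<beta>. \<exists>c\<in>vdom v. forces s \<phi> (?\<rho>'(v := c)) \<beta>"])
  then show ?case by (simp only: forces.simps)
qed

end



lemma finite_fvt: "finite (fvt t)" by (induction t) auto
lemma finite_fv: "finite (fv \<phi>)" by (induction \<phi>) (auto simp: finite_fvt)

lemma sort_ge: "v \<in> fv \<phi> \<Longrightarrow> vtype v \<le> sort \<phi>"
  unfolding sort_def using finite_fv[of \<phi>] by (intro Max_ge) auto

definition sw :: "'a \<Rightarrow> 'a \<Rightarrow> 'a \<Rightarrow> 'a" where
  "sw a b v = (if v = a then b else if v = b then a else v)"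

lemma sw_sw: "sw a b (sw a b v) = v" by (simp add: sw_def)
lemma sw_mem: "a \<in> S \<Longrightarrow> b \<in> S \<Longrightarrow> (sw a b v \<in> S) = (v \<in> S)" by (auto simp: sw_def)

context bm begin

lemma fv_valid: "wf s b \<phi> \<Longrightarrow> v \<in> fv \<phi> \<Longrightarrow> valid_var s v"
proof (induction \<phi> arbitrary: b)
  case (Eq k x y)
  then have "ty s x = Some k" "ty s y = Some k" "v \<in> fvt x \<union> fvt y" by auto
  then show ?case using ty_valid by blast
next
  case (Prov z \<phi>)
  then have "ty s z = Some 0" "wf s False \<phi>" "v \<in> fvt z \<union> fv \<phi>" by auto
  then show ?case using ty_valid Prov.IH by blast
qed auto

lemma take_D: assumes a: "\<alpha> \<in> D (s - 1)" and n: "1 \<le> n" "n \<le> s"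
  shows "take n \<alpha> \<in> D (n - 1)" "lh (take n \<alpha>) = lh \<alpha>"
proof -
  have la: "length \<alpha> = s" using a n by (simp add: D_iff)
  have ai: "\<And>i. i \<le> s - 1 \<Longrightarrow> set (\<alpha>!i) \<subseteq> A i \<and> length (\<alpha>!i) = lh \<alpha>" using a by (simp add: D_iff)
  show l: "lh (take n \<alpha>) = lh \<alpha>" using n by (simp add: lh_def)
  show "take n \<alpha> \<in> D (n - 1)" unfolding D_iff
  proof (intro conjI allI impI)
    show "length (take n \<alpha>) = Suc (n - 1)" using la n by simp
    fix i assume i: "i \<le> n - 1"
    then have "i < n" "i \<le> s - 1" using n by auto
    then show "set (take n \<alpha> ! i) \<subseteq> A i" "length (take n \<alpha> ! i) = lh (take n \<alpha>)"
      using ai[of i] l by simp_all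
  qed
qed

lemma tau_nu: assumes ok: "perm_ok \<theta> \<theta>'" and ks: "k' < s" and xi: "\<xi> \<in> C (Suc k')"
  shows "tau \<theta> (Suc k') (en (nu (Suc k') \<xi>)) = en (nu (Suc k') (\<lambda>n v. tau \<theta> k' (\<xi> n (\<theta> k' n v))))"
proof -
  define \<xi>' where "\<xi>' n v = tau \<theta> k' (\<xi> n (\<theta> k' n v))" for n v
  have nP': "nu (Suc k') \<xi> \<in> PF k'" using nu_PF[OF _ xi] by simp
  have "tau \<theta> (Suc k') (en (nu (Suc k') \<xi>)) = en (\<lambda>(x, n). map_option (tau \<theta> k') (nu (Suc k') \<xi> (pm \<theta> x, n)))"
    using dec_en[OF ks nP'] by simp
  also have "(\<lambda>(x, n). map_option (tau \<theta> k') (nu (Suc k') \<xi> (pm \<theta> x, n))) = nu (Suc k') \<xi>'"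
  proof (intro ext, clarify)
    fix x n
    show "map_option (tau \<theta> k') (nu (Suc k') \<xi> (pm \<theta> x, n)) = nu (Suc k') \<xi>' (x, n)"
    proof (cases "x \<in> D k' \<and> n < lh x")
      case True
      then have x: "x \<in> D k'" "n < lh x" by auto
      have px: "pm \<theta> x \<in> D k'" using x pm_D[OF ok] by simp
      have lp: "lh (pm \<theta> x) = lh x" using lh_pm_D[OF x(1)] .
      have lx: "length x = Suc k'" "length (x ! k') = lh x" using x(1) by (simp_all add: D_iff)
      have "pm \<theta> x ! k' ! n = \<theta> k' n (x ! k' ! n)" using lx x(2) by simp
      then show ?thesis using x px lp by (simp add: nu_def \<xi>'_def)
    next
      case False
      then have "\<not> (pm \<theta> x \<in> D k' \<and> n < lh (pm \<theta> x))"
        using pm_D[OF ok] lh_pm_D by metis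
      then show ?thesis using False by (simp add: nu_def)
    qed
  qed
  moreover have "\<xi>' = (\<lambda>n v. tau \<theta> k' (\<xi> n (\<theta> k' n v)))" by (simp add: fun_eq_iff \<xi>'_def)
  ultimately show ?thesis by simp
qed

lemma nu_cong: "(\<And>n v. v \<in> A k' \<Longrightarrow> \<xi>1 n v = \<xi>2 n v) \<Longrightarrow> nu (Suc k') \<xi>1 = nu (Suc k') \<xi>2"
proof (intro ext, clarify)
  fix x n assume h: "\<And>n v. v \<in> A k' \<Longrightarrow> \<xi>1 n v = \<xi>2 n v"
  show "nu (Suc k') \<xi>1 (x, n) = nu (Suc k') \<xi>2 (x, n)"
  proof (cases "x \<in> D k' \<and> n < lh x")
    case True
    then have "x ! k' ! n \<in> set (x ! k')" "set (x ! k') \<subseteq> A k'" by (simp_all add: D_iff)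
    then have "x ! k' ! n \<in> A k'" by blast
    then show ?thesis using True h[of "x ! k' ! n" n] by (simp add: nu_def)
  next
    case False then show ?thesis by (auto simp: nu_def)
  qed
qed

lemma tau_B_fix: assumes ok: "perm_ok \<theta> \<theta>'" and ks: "k' < s" and th: "\<forall>i<k'. \<forall>n v. \<theta> i n v = v"
  and u: "u \<in> B (Suc k')"
  shows "tau \<theta> (Suc k') u = u"
proof -
  have uA: "u \<in> A (Suc k')" using u by (simp add: B_def)
  have f: "dec (Suc k') u \<in> PF k'" "en (dec (Suc k') u) = u" using A_SucE[OF ks uA] by simp_all
  define r :: "'u list list" where "r = replicate (Suc k') []"
  have ur: "\<And>n. dec (Suc k') u (r, n) \<noteq> None" using u by (simp add: B_def r_def del: replicate_Suc)
  have rD: "r \<in> D k'" unfolding r_def by (rule root_D)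
  have tid: "\<And>w. w \<in> A k' \<Longrightarrow> tau \<theta> k' w = w" using tau_id[OF ok _ th] ks by simp
  have "(\<lambda>(x, n). map_option (tau \<theta> k') (dec (Suc k') u (pm \<theta> x, n))) = dec (Suc k') u"
  proof (intro ext, clarify)
    fix x n
    show "map_option (tau \<theta> k') (dec (Suc k') u (pm \<theta> x, n)) = dec (Suc k') u (x, n)"
    proof (cases "x \<in> D k'")
      case True
      have px: "pm \<theta> x \<in> D k'" using True pm_D[OF ok] by simp
      obtain w where w: "dec (Suc k') u (r, n) = Some w" using ur[of n] by auto
      have wA: "w \<in> A k'" using PF_facts(2)[OF f(1) w] .
      have "dec (Suc k') u (x, n) = Some w"
        using PF_facts(3)[OF f(1) rD True _ w] nle_root[OF True] r_def by simp
      moreover have "dec (Suc k') u (pm \<theta> x, n) = Some w"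
        using PF_facts(3)[OF f(1) rD px _ w] nle_root[OF px] r_def by simp
      ultimately show ?thesis using tid[OF wA] by simp
    next
      case False
      then have "pm \<theta> x \<notin> D k'" using pm_D[OF ok] by simp
      then have "dec (Suc k') u (pm \<theta> x, n) = None" "dec (Suc k') u (x, n) = None"
        using False PF_facts(1)[OF f(1)] by blast+
      then show ?thesis by simp
    qed
  qed
  then show ?thesis using f(2) by simp
qed

lemma part1:
  assumes m: "1 \<le> m" and wf: "wf s True \<phi>" and so: "sort \<phi> \<le> m"
    and rho: "\<forall>v\<in>fv \<phi>. \<rho> v \<in> vdom v"
    and a: "\<alpha> \<in> D (s - 1)" and b: "\<beta> \<in> D (s - 1)"
    and agr: "\<forall>i<m. i < s \<longrightarrow> \<alpha> ! i = \<beta> ! i"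
  shows "forces s \<phi> \<rho> \<alpha> \<longleftrightarrow> forces s \<phi> \<rho> \<beta>"
proof -
  have s0: "0 < s" using s1 by simp
  have la: "length \<alpha> = s" "length \<beta> = s" using a b s1 by (simp_all add: D_iff)
  have ai: "\<And>i. i < s \<Longrightarrow> set (\<alpha>!i) \<subseteq> A i \<and> length (\<alpha>!i) = lh \<alpha>" using a by (simp add: D_iff)
  have bi: "\<And>i. i < s \<Longrightarrow> set (\<beta>!i) \<subseteq> A i \<and> length (\<beta>!i) = lh \<beta>" using b by (simp add: D_iff)
  have lab: "lh \<alpha> = lh \<beta>" using agr m s0 by (simp add: lh_def)
  define \<theta> where "\<theta> i n v = (if m \<le> i \<and> i < s \<and> n < lh \<alpha> then sw (\<alpha>!i!n) (\<beta>!i!n) v else v)" for i n v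
  have ok: "perm_ok \<theta> \<theta>" unfolding perm_ok_def
  proof (intro conjI allI)
    fix i n v
    show "\<theta> i n (\<theta> i n v) = v" "\<theta> i n (\<theta> i n v) = v" by (simp_all add: \<theta>_def sw_sw)
    show "(\<theta> i n v \<in> A i) = (v \<in> A i)"
    proof (cases "m \<le> i \<and> i < s \<and> n < lh \<alpha>")
      case True
      then have "\<alpha>!i!n \<in> A i" "\<beta>!i!n \<in> A i" using ai[of i] bi[of i] lab by (auto simp: subset_iff)
      then show ?thesis using True by (simp add: \<theta>_def sw_mem)
    qed (auto simp: \<theta>_def)
  qed
  have pa: "pm \<theta> \<alpha> = \<beta>"
  proof (rule nth_equalityI)
    show "length (pm \<theta> \<alpha>) = length \<beta>" using la by simp
    fix i assume "i < length (pm \<theta> \<alpha>)"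
    then have i: "i < s" using la by simp
    show "pm \<theta> \<alpha> ! i = \<beta> ! i"
    proof (rule nth_equalityI)
      show "length (pm \<theta> \<alpha> ! i) = length (\<beta> ! i)" using i la ai[OF i] bi[OF i] lab by simp
      fix n assume "n < length (pm \<theta> \<alpha> ! i)"
      then have n: "n < lh \<alpha>" using i la ai[OF i] by simp
      show "pm \<theta> \<alpha> ! i ! n = \<beta> ! i ! n"
      proof (cases "m \<le> i")
        case True then show ?thesis using i la ai[OF i] n by (simp add: \<theta>_def sw_def)
      next
        case False then show ?thesis using i la ai[OF i] n agr by (simp add: \<theta>_def)
      qed
    qed
  qed
  have "forces s \<phi> \<rho> \<alpha> \<longleftrightarrow> forces s \<phi> (\<lambda>v. tau \<theta> (vtype v) (\<rho> v)) \<beta>"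
    using forces_tau[OF perm_ok_sym[OF ok] wf a rho] pa by simp
  also have "\<dots> \<longleftrightarrow> forces s \<phi> \<rho> \<beta>"
  proof (rule forces_cong, intro ballI)
    fix v assume v: "v \<in> fv \<phi>"
    have vv: "valid_var s v" using fv_valid[OF wf v] .
    have vm: "vtype v \<le> m" using sort_ge[OF v] so by simp
    have "\<rho> v \<in> A (vtype v)" using rho v vdom_A[OF vv] by blast
    moreover have "\<forall>i<vtype v. \<forall>n w. \<theta> i n w = w" using vm by (simp add: \<theta>_def)
    ultimately show "tau \<theta> (vtype v) (\<rho> v) = \<rho> v" using tau_id[OF ok valid_le[OF vv]] by simp
  qed
  finally show ?thesis .
qed

end



context bm begin

lemma part2:
  assumes p: "1 \<le> p" "p \<le> s" and Hk: "vkind_of H = VLawless" and Ht: "vtype H = p"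
    and wf: "wf s True \<phi>" and so: "sort \<phi> \<le> p"
    and fvc: "\<forall>v\<in>fv \<phi>. vtype v = p \<and> vkind_of v \<in> {VGen, VLawless} \<longrightarrow> v = H"
    and rho: "\<forall>v\<in>fv \<phi> - {H}. \<rho> v \<in> vdom v"
    and a: "\<alpha> \<in> D (s - 1)" and g: "g \<in> L p" and h: "h \<in> L p"
    and agr: "\<forall>n<lh \<alpha>. dec p g (take p \<alpha>, n) = dec p h (take p \<alpha>, n)"
  shows "forces s \<phi> (\<rho>(H := g)) \<alpha> \<longleftrightarrow> forces s \<phi> (\<rho>(H := h)) \<alpha>"
proof -
  obtain p' where p': "p = Suc p'" using p by (cases p) auto
  have ps: "p' < s" using p p' by simp
  obtain \<xi>g where xg: "\<xi>g \<in> C p" "g = en (nu p \<xi>g)" using g by (auto simp: L_def)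
  obtain \<xi>h where xh: "\<xi>h \<in> C p" "h = en (nu p \<xi>h)" using h by (auto simp: L_def)
  have bg: "\<And>n. bij_betw (\<xi>g n) (A p') (A p')" using xg(1) p' by (simp add: C_def)
  have bh: "\<And>n. bij_betw (\<xi>h n) (A p') (A p')" using xh(1) p' by (simp add: C_def)
  define \<psi> where "\<psi> n v = inv_into (A p') (\<xi>g n) (\<xi>h n v)" for n v
  define \<psi>' where "\<psi>' n v = inv_into (A p') (\<xi>h n) (\<xi>g n v)" for n v
  have \<psi>A: "\<psi> n v \<in> A p'" "\<xi>g n (\<psi> n v) = \<xi>h n v" if "v \<in> A p'" for n v
  proof -
    have "\<xi>h n v \<in> \<xi>g n ` A p'" using that bij_betwE[OF bh[of n]] bij_betw_imp_surj_on[OF bg[of n]] by auto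
    then show "\<psi> n v \<in> A p'" "\<xi>g n (\<psi> n v) = \<xi>h n v"
      unfolding \<psi>_def by (auto intro: inv_into_into f_inv_into_f)
  qed
  have \<psi>A': "\<psi>' n v \<in> A p'" "\<xi>h n (\<psi>' n v) = \<xi>g n v" if "v \<in> A p'" for n v
  proof -
    have "\<xi>g n v \<in> \<xi>h n ` A p'" using that bij_betwE[OF bg[of n]] bij_betw_imp_surj_on[OF bh[of n]] by auto
    then show "\<psi>' n v \<in> A p'" "\<xi>h n (\<psi>' n v) = \<xi>g n v"
      unfolding \<psi>'_def by (auto intro: inv_into_into f_inv_into_f)
  qed
  have injg: "\<And>n. inj_on (\<xi>g n) (A p')" using bg bij_betw_imp_inj_on by blast
  have injh: "\<And>n. inj_on (\<xi>h n) (A p')" using bh bij_betw_imp_inj_on by blast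
  have inv1: "\<psi>' n (\<psi> n v) = v" if "v \<in> A p'" for n v
    unfolding \<psi>'_def using \<psi>A[OF that] inv_into_f_f[OF injh that] by simp
  have inv2: "\<psi> n (\<psi>' n v) = v" if "v \<in> A p'" for n v
    unfolding \<psi>_def using \<psi>A'[OF that] inv_into_f_f[OF injg that] by simp
  define \<theta> where "\<theta> i n v = (if i = p' \<and> v \<in> A p' then \<psi> n v else v)" for i n v
  define \<theta>' where "\<theta>' i n v = (if i = p' \<and> v \<in> A p' then \<psi>' n v else v)" for i n v
  have ok: "perm_ok \<theta> \<theta>'" unfolding perm_ok_def
  proof (intro conjI allI)
    fix i n v
    show "\<theta>' i n (\<theta> i n v) = v" using \<psi>A inv1 by (auto simp: \<theta>_def \<theta>'_def)
    show "\<theta> i n (\<theta>' i n v) = v" using \<psi>A' inv2 by (auto simp: \<theta>_def \<theta>'_def)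
    show "(\<theta> i n v \<in> A i) = (v \<in> A i)" using \<psi>A by (auto simp: \<theta>_def)
  qed
  have th_id: "\<forall>i<p'. \<forall>n v. \<theta> i n v = v" by (simp add: \<theta>_def)
  have tid: "\<And>k w. k \<le> p' \<Longrightarrow> w \<in> A k \<Longrightarrow> tau \<theta> k w = w"
    using tau_id[OF ok] th_id ps by (simp add: \<theta>_def)
  have la: "length \<alpha> = s" using a s1 by (simp add: D_iff)
  have ai: "\<And>i. i < s \<Longrightarrow> set (\<alpha>!i) \<subseteq> A i \<and> length (\<alpha>!i) = lh \<alpha>" using a by (simp add: D_iff)
  have tD: "take p \<alpha> \<in> D p'" "lh (take p \<alpha>) = lh \<alpha>" using take_D[OF a p] p' by simp_all
  have nPg: "nu (Suc p') \<xi>g \<in> PF p'" using nu_PF[OF _ xg(1)] p' by simp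
  have nPh: "nu (Suc p') \<xi>h \<in> PF p'" using nu_PF[OF _ xh(1)] p' by simp
  have same: "\<xi>g n (\<alpha> ! p' ! n) = \<xi>h n (\<alpha> ! p' ! n)" if n: "n < lh \<alpha>" for n
  proof -
    have "dec p g (take p \<alpha>, n) = dec p h (take p \<alpha>, n)" using agr n by simp
    then have "nu (Suc p') \<xi>g (take p \<alpha>, n) = nu (Suc p') \<xi>h (take p \<alpha>, n)"
      using xg(2) xh(2) p' dec_en[OF ps nPg] dec_en[OF ps nPh] by simp
    moreover have "take p \<alpha> ! p' = \<alpha> ! p'" using p' by simp
    ultimately show ?thesis using tD n p' by (simp add: nu_def)
  qed
  have pa: "pm \<theta>' \<alpha> = \<alpha>"
  proof (rule nth_equalityI)
    show "length (pm \<theta>' \<alpha>) = length \<alpha>" by simp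
    fix i assume "i < length (pm \<theta>' \<alpha>)"
    then have i: "i < s" using la by simp
    show "pm \<theta>' \<alpha> ! i = \<alpha> ! i"
    proof (rule nth_equalityI)
      show "length (pm \<theta>' \<alpha> ! i) = length (\<alpha> ! i)" using i la by simp
      fix n assume "n < length (pm \<theta>' \<alpha> ! i)"
      then have n: "n < lh \<alpha>" using i la ai[OF i] by simp
      have el: "\<alpha> ! i ! n \<in> A i" using ai[OF i] n by (auto simp: subset_iff)
      show "pm \<theta>' \<alpha> ! i ! n = \<alpha> ! i ! n"
      proof (cases "i = p'")
        case True
        have "\<psi>' n (\<alpha> ! p' ! n) = \<alpha> ! p' ! n"
          unfolding \<psi>'_def using same[OF n] inv_into_f_f[OF injh] el True by simp
        then show ?thesis using True i la ai[OF i] n el by (simp add: \<theta>'_def)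
      next
        case False then show ?thesis using i la ai[OF i] n by (simp add: \<theta>'_def)
      qed
    qed
  qed
  have tg: "tau \<theta> p g = h"
  proof -
    have "tau \<theta> p g = en (nu (Suc p') (\<lambda>n v. tau \<theta> p' (\<xi>g n (\<theta> p' n v))))"
      using tau_nu[OF ok ps, of \<xi>g] xg p' by simp
    also have "nu (Suc p') (\<lambda>n v. tau \<theta> p' (\<xi>g n (\<theta> p' n v))) = nu (Suc p') \<xi>h"
    proof (rule nu_cong)
      fix n v assume v: "v \<in> A p'"
      have "\<xi>h n v \<in> A p'" using bij_betwE[OF bh[of n]] v by blast
      then show "tau \<theta> p' (\<xi>g n (\<theta> p' n v)) = \<xi>h n v" using v \<psi>A[OF v] tid[of p'] by (simp add: \<theta>_def)
    qed
    finally show ?thesis using xh p' by simp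
  qed
  obtain Hi where Hv: "H = (VLawless, p, Hi)" using Hk Ht by (cases H) auto
  have rho0: "\<forall>v\<in>fv \<phi>. (\<rho>(H := g)) v \<in> vdom v" using rho g Hv by auto
  have "forces s \<phi> (\<rho>(H := g)) \<alpha> \<longleftrightarrow> forces s \<phi> (\<lambda>v. tau \<theta> (vtype v) ((\<rho>(H := g)) v)) \<alpha>"
    using forces_tau[OF ok wf a rho0] by (simp only: pa)
  also have "\<dots> \<longleftrightarrow> forces s \<phi> (\<rho>(H := h)) \<alpha>"
  proof (rule forces_cong, intro ballI)
    fix v assume v: "v \<in> fv \<phi>"
    show "tau \<theta> (vtype v) ((\<rho>(H := g)) v) = (\<rho>(H := h)) v"
    proof (cases "v = H")
      case True then show ?thesis using tg Ht by simp
    next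
      case False
      have vv: "valid_var s v" using fv_valid[OF wf v] .
      have vp: "vtype v \<le> p" using sort_ge[OF v] so by simp
      have rv: "\<rho> v \<in> vdom v" using rho v False by simp
      show ?thesis
      proof (cases "vtype v \<le> p'")
        case True
        have "\<rho> v \<in> A (vtype v)" using rv vdom_A[OF vv] by blast
        then show ?thesis using tid[OF True] False by simp
      next
        case nle: False
        then have vt: "vtype v = p" using vp p' by simp
        obtain kd n i where vd: "v = (kd, n, i)" by (cases v)
        have "kd = VLaw"
        proof (cases kd)
          case VNum then show ?thesis using vv vd vt p by simp
        next
          case VGen then show ?thesis using fvc v False vd vt by auto
        next
          case VLawless then show ?thesis using fvc v False vd vt by auto
        qed simp
        then have "\<rho> v \<in> B (Suc p')" using rv vd vt p' by simp
        then have "tau \<theta> (Suc p') (\<rho> v) = \<rho> v" by (rule tau_B_fix[OF ok ps th_id])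
        then show ?thesis using False vt p' by simp
      qed
    qed
  qed
  finally show ?thesis .
qed

end

theorem lemma7p3:
  fixes s :: nat
    and ne :: "nat \<Rightarrow> 'u"
    and en :: "('u list list \<times> nat \<Rightarrow> 'u option) \<Rightarrow> 'u"
  assumes "1 \<le> s"
    and "inj ne"
    and "\<forall>k<s. inj_on en (beth.PF ne en k)"
  shows
   "(\<forall>m \<phi> \<rho> \<alpha> \<beta>.
       1 \<le> m \<and> wf s True \<phi> \<and> sort \<phi> \<le> m \<and>
       (\<forall>v\<in>fv \<phi>. \<rho> v \<in> beth.vdom ne en v) \<and>
       \<alpha> \<in> beth.D ne en (s - 1) \<and> \<beta> \<in> beth.D ne en (s - 1) \<and>
       (\<forall>i<m. i < s \<longrightarrow> \<alpha> ! i = \<beta> ! i)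
     \<longrightarrow> (beth.forces ne en s \<phi> \<rho> \<alpha> \<longleftrightarrow> beth.forces ne en s \<phi> \<rho> \<beta>))
  \<and> (\<forall>p H \<phi> \<rho> \<alpha> g h.
       1 \<le> p \<and> p \<le> s \<and> vkind_of H = VLawless \<and> vtype H = p \<and>
       wf s True \<phi> \<and> sort \<phi> \<le> p \<and>
       (\<forall>v\<in>fv \<phi>. vtype v = p \<and> vkind_of v \<in> {VGen, VLawless} \<longrightarrow> v = H) \<and>
       (\<forall>v\<in>fv \<phi> - {H}. \<rho> v \<in> beth.vdom ne en v) \<and>
       \<alpha> \<in> beth.D ne en (s - 1) \<and>
       g \<in> beth.L ne en p \<and> h \<in> beth.L ne en p \<and>
       (\<forall>n<lh \<alpha>. beth.dec ne en p g (take p \<alpha>, n) = beth.dec ne en p h (take p \<alpha>, n))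
     \<longrightarrow> (beth.forces ne en s \<phi> (\<rho>(H := g)) \<alpha> \<longleftrightarrow> beth.forces ne en s \<phi> (\<rho>(H := h)) \<alpha>))"
proof -
  interpret bm ne en s by unfold_locales (use assms in auto)
  show ?thesis
  proof (intro conjI allI impI)
    fix m \<phi> \<rho> \<alpha> \<beta>
    assume "1 \<le> m \<and> wf s True \<phi> \<and> sort \<phi> \<le> m \<and>
       (\<forall>v\<in>fv \<phi>. \<rho> v \<in> vdom v) \<and> \<alpha> \<in> D (s - 1) \<and> \<beta> \<in> D (s - 1) \<and>
       (\<forall>i<m. i < s \<longrightarrow> \<alpha> ! i = \<beta> ! i)"
    then show "forces s \<phi> \<rho> \<alpha> \<longleftrightarrow> forces s \<phi> \<rho> \<beta>" using part1 by blast
  next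
    fix p H \<phi> \<rho> \<alpha> g h
    assume "1 \<le> p \<and> p \<le> s \<and> vkind_of H = VLawless \<and> vtype H = p \<and>
       wf s True \<phi> \<and> sort \<phi> \<le> p \<and>
       (\<forall>v\<in>fv \<phi>. vtype v = p \<and> vkind_of v \<in> {VGen, VLawless} \<longrightarrow> v = H) \<and>
       (\<forall>v\<in>fv \<phi> - {H}. \<rho> v \<in> vdom v) \<and> \<alpha> \<in> D (s - 1) \<and> g \<in> L p \<and> h \<in> L p \<and>
       (\<forall>n<lh \<alpha>. dec p g (take p \<alpha>, n) = dec p h (take p \<alpha>, n))"
    then show "forces s \<phi> (\<rho>(H := g)) \<alpha> \<longleftrightarrow> forces s \<phi> (\<rho>(H := h)) \<alpha>"
      using part2 by blast
  qed
qed



end
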